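(* Let $\mathcal M_{A,B,\partial}$ be an $M$-pair. Every $\partial$-boundary homologically essential element of $B$ is $\partial_B$-homologically essential. The number of $\partial$-boundary homologically essential elements of degree $k$ equals $\dim\partial_*\big(H_{k+1}(\mathbb E(A),\mathbb E(B),\partial)\big)$.
   Context: $\mathbb E$ is a field. $A=\{a_1\prec\dots\prec a_N\}$ is a finite linearly ordered set with grading $\deg:A\to\mathbb Z$, $\mathbb E(A)$ the graded vector space with basis $A$. An $M$-differential on $\mathbb E(A)$ is a degree $-1$ linear map $\partial$ with $\partial^2=0$ and $\partial(a_i)\in\mathrm{span}\{a_1,\dots,a_{i-1}\}$. For $B\subset A$ with $\partial(\mathbb E(B))\subset\mathbb E(B)$, $\mathcal M_{A,B,\partial}$ is an $M$-pair and $\partial_B=\partial|_{\mathbb E(B)}$ is an $M$-differential on $\mathbb E(B)$ (with induced order and grading). For an $M$-complex $\mathcal M_{A,\partial}$, equivalence means conjugation by a graded automorphism preserving each $\mathrm{span}\{a_1,\dots,a_i\}$; an $M$-differential is elementary if each basis element maps to $0$ or to a single basis element, and no two basis elements map to the same basis element; every $M$-differential $\partial$ is equivalent to a unique elementary $\partial_1$ (Barannikov); $a_i,a_j$ form a $\partial$-pair if $\partial_1(a_i)=a_j$, and an element is $\partial$-homologically essential if it lies in no $\partial$-pair. Let $B=\{b_1\prec\dots\prec b_K\}$, $B^k=\{b_1,\dots,b_k\}$, $\iota_*:H_*(\mathbb E(B^k),\partial_B)\to H_*(\mathbb E(B),\partial_B)$ induced by inclusion, and $\partial_*:H_{*+1}(\mathbb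 E(A),\mathbb E(B),\partial)\to H_*(\mathbb E(B),\partial_B)$ the connecting map of the long exact sequence of the pair. Set $I_k=\iota_*H_*(\mathbb E(B^k),\partial_B)\cap\partial_*H_*(\mathbb E(A),\mathbb E(B),\partial)$, $I_0=0$. An element $b_k$ is $\partial$-boundary homologically essential if $I_k\ne I_{k-1}$. *)

theory Defs
  imports Complex_Main "HOL-Library.Function_Algebras"
begin

text \<open>Basis elements are natural numbers; a finite set S of naturals, ordered by the
usual order on nat, is the ordered basis. The graded space E(S) is the space of
functions nat => 'a supported in S. A linear map on E(S) is given by its matrix
M :: nat => nat => 'a, where the image of the basis element j is
sum over i of M i j times the basis element i.\<close>

definition fscale :: "'a::field \<Rightarrow> (nat \<Rightarrow> 'a) \<Rightarrow> (nat \<Rightarrow> 'a)" where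
  "fscale c f = (\<lambda>i. c * f i)"

global_interpretation fvs: vector_space "fscale :: 'a::field \<Rightarrow> (nat \<Rightarrow> 'a) \<Rightarrow> _"
  by unfold_locales (auto simp: fscale_def algebra_simps fun_eq_iff)

definition espace :: "nat set \<Rightarrow> (nat \<Rightarrow> 'a::field) set" where
  "espace S = {v. \<forall>i. i \<notin> S \<longrightarrow> v i = 0}"

definition espace_deg :: "nat set \<Rightarrow> (nat \<Rightarrow> int) \<Rightarrow> int \<Rightarrow> (nat \<Rightarrow> 'a::field) set" where
  "espace_deg S deg k = {v. \<forall>i. (i \<notin> S \<or> deg i \<noteq> k) \<longrightarrow> v i = 0}"

definition mapply :: "nat set \<Rightarrow> (nat \<Rightarrow> nat \<Rightarrow> 'a::field) \<Rightarrow> (nat \<Rightarrow> 'a) \<Rightarrow> (nat \<Rightarrow> 'a)" where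
  "mapply S M v = (\<lambda>i. \<Sum>j\<in>S. M i j * v j)"

definition mmult :: "nat set \<Rightarrow> (nat \<Rightarrow> nat \<Rightarrow> 'a::field) \<Rightarrow> (nat \<Rightarrow> nat \<Rightarrow> 'a) \<Rightarrow> (nat \<Rightarrow> nat \<Rightarrow> 'a)" where
  "mmult S M N = (\<lambda>i j. \<Sum>k\<in>S. M i k * N k j)"

definition midentity :: "nat set \<Rightarrow> (nat \<Rightarrow> nat \<Rightarrow> 'a::field)" where
  "midentity S = (\<lambda>i j. if i = j \<and> i \<in> S then 1 else 0)"

definition mrestrict :: "nat set \<Rightarrow> (nat \<Rightarrow> nat \<Rightarrow> 'a::field) \<Rightarrow> (nat \<Rightarrow> nat \<Rightarrow> 'a)" where
  "mrestrict S M = (\<lambda>i j. if i \<in> S \<and> j \<in> S then M i j else 0)"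

definition is_Mdiff :: "nat set \<Rightarrow> (nat \<Rightarrow> int) \<Rightarrow> (nat \<Rightarrow> nat \<Rightarrow> 'a::field) \<Rightarrow> bool" where
  "is_Mdiff S deg D \<longleftrightarrow>
     finite S \<and>
     (\<forall>i j. D i j \<noteq> 0 \<longrightarrow> i \<in> S \<and> j \<in> S \<and> i < j \<and> deg i = deg j - 1) \<and>
     mmult S D D = (\<lambda>i j. 0)"

definition is_elementary :: "nat set \<Rightarrow> (nat \<Rightarrow> int) \<Rightarrow> (nat \<Rightarrow> nat \<Rightarrow> 'a::field) \<Rightarrow> bool" where
  "is_elementary S deg D \<longleftrightarrow>
     is_Mdiff S deg D \<and>
     (\<forall>j\<in>S. (\<forall>i. D i j = 0) \<or> (\<exists>i\<in>S. D i j = 1 \<and> (\<forall>i'. i' \<noteq> i \<longrightarrow> D i' j = 0))) \<and>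
     (\<forall>i j j'. j \<in> S \<longrightarrow> j' \<in> S \<longrightarrow> D i j \<noteq> 0 \<longrightarrow> D i j' \<noteq> 0 \<longrightarrow> j = j')"

definition is_filt_aut :: "nat set \<Rightarrow> (nat \<Rightarrow> int) \<Rightarrow> (nat \<Rightarrow> nat \<Rightarrow> 'a::field) \<Rightarrow> bool" where
  "is_filt_aut S deg T \<longleftrightarrow>
     (\<forall>i j. T i j \<noteq> 0 \<longrightarrow> i \<in> S \<and> j \<in> S \<and> i \<le> j \<and> deg i = deg j) \<and>
     (\<exists>Ti. mmult S T Ti = midentity S \<and> mmult S Ti T = midentity S)"

definition Mequiv :: "nat set \<Rightarrow> (nat \<Rightarrow> int) \<Rightarrow> (nat \<Rightarrow> nat \<Rightarrow> 'a::field) \<Rightarrow> (nat \<Rightarrow> nat \<Rightarrow> 'a) \<Rightarrow> bool" where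
  "Mequiv S deg D D' \<longleftrightarrow>
     (\<exists>T Ti. is_filt_aut S deg T \<and> mmult S T Ti = midentity S \<and> mmult S Ti T = midentity S \<and>
            D' = mmult S Ti (mmult S D T))"

definition barannikov :: "nat set \<Rightarrow> (nat \<Rightarrow> int) \<Rightarrow> (nat \<Rightarrow> nat \<Rightarrow> 'a::field) \<Rightarrow> (nat \<Rightarrow> nat \<Rightarrow> 'a)" where
  "barannikov S deg D = (THE D1. is_elementary S deg D1 \<and> Mequiv S deg D D1)"

text \<open>a_i, a_j form a pair if the canonical form sends a_i to a_j.\<close>
definition is_pair :: "nat set \<Rightarrow> (nat \<Rightarrow> int) \<Rightarrow> (nat \<Rightarrow> nat \<Rightarrow> 'a::field) \<Rightarrow> nat \<Rightarrow> nat \<Rightarrow> bool" where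
  "is_pair S deg D i j \<longleftrightarrow> i \<in> S \<and> j \<in> S \<and> barannikov S deg D j i = 1"

definition hom_essential :: "nat set \<Rightarrow> (nat \<Rightarrow> int) \<Rightarrow> (nat \<Rightarrow> nat \<Rightarrow> 'a::field) \<Rightarrow> nat \<Rightarrow> bool" where
  "hom_essential S deg D a \<longleftrightarrow> a \<in> S \<and> \<not> (\<exists>x. is_pair S deg D a x \<or> is_pair S deg D x a)"

definition is_Mpair :: "nat set \<Rightarrow> nat set \<Rightarrow> (nat \<Rightarrow> int) \<Rightarrow> (nat \<Rightarrow> nat \<Rightarrow> 'a::field) \<Rightarrow> bool" where
  "is_Mpair A B deg D \<longleftrightarrow> is_Mdiff A deg D \<and> B \<subseteq> A \<and>
     (\<forall>v \<in> espace B. mapply A D v \<in> espace B)"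

text \<open>Subspaces of H_*(E(B)) are identified with their preimages in the cycle space
Z(B), i.e. with subspaces of Z(B) containing the boundaries Bd(B).\<close>

definition cycles :: "nat set \<Rightarrow> (nat \<Rightarrow> nat \<Rightarrow> 'a::field) \<Rightarrow> (nat \<Rightarrow> 'a) set" where
  "cycles C D = {v \<in> espace C. mapply C D v = 0}"

definition boundaries :: "nat set \<Rightarrow> (nat \<Rightarrow> nat \<Rightarrow> 'a::field) \<Rightarrow> (nat \<Rightarrow> 'a) set" where
  "boundaries C D = mapply C D ` espace C"

text \<open>Preimage in Z(B) of the image of the connecting map
  H_{*+1}(E(A),E(B)) -> H_*(E(B)): the boundaries d x of relative cycles x.\<close>
definition conn_image :: "nat set \<Rightarrow> nat set \<Rightarrow> (nat \<Rightarrow> nat \<Rightarrow> 'a::field) \<Rightarrow> (nat \<Rightarrow> 'a) set" where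
  "conn_image A B D = {mapply A D x | x. x \<in> espace A \<and> mapply A D x \<in> espace B}"

text \<open>Degree-k part: image of H_{k+1}(E(A),E(B)).\<close>
definition conn_image_deg :: "nat set \<Rightarrow> nat set \<Rightarrow> (nat \<Rightarrow> int) \<Rightarrow> (nat \<Rightarrow> nat \<Rightarrow> 'a::field) \<Rightarrow> int \<Rightarrow> (nat \<Rightarrow> 'a) set" where
  "conn_image_deg A B deg D k =
     {mapply A D x | x. x \<in> espace_deg A deg (k + 1) \<and> mapply A D x \<in> espace B}"

definition boundaries_deg :: "nat set \<Rightarrow> (nat \<Rightarrow> int) \<Rightarrow> (nat \<Rightarrow> nat \<Rightarrow> 'a::field) \<Rightarrow> int \<Rightarrow> (nat \<Rightarrow> 'a) set" where
  "boundaries_deg C deg D k = mapply C D ` espace_deg C deg (k + 1)"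

text \<open>Preimage in Z(B) of I_k for the initial segment Bk = B^k of B:
  (iota_* H(E(B^k)) + 0) intersected with the image of the connecting map.\<close>
definition I_pre :: "nat set \<Rightarrow> nat set \<Rightarrow> (nat \<Rightarrow> nat \<Rightarrow> 'a::field) \<Rightarrow> nat set \<Rightarrow> (nat \<Rightarrow> 'a) set" where
  "I_pre A B D Bk =
     {z + y | z y. z \<in> cycles Bk (mrestrict Bk D) \<and> y \<in> boundaries B (mrestrict B D)}
     \<inter> conn_image A B D"

definition bdry_essential :: "nat set \<Rightarrow> nat set \<Rightarrow> (nat \<Rightarrow> nat \<Rightarrow> 'a::field) \<Rightarrow> nat \<Rightarrow> bool" where
  "bdry_essential A B D b \<longleftrightarrow> b \<in> B \<and>
     I_pre A B D {c \<in> B. c \<le> b} \<noteq> I_pre A B D {c \<in> B. c < b}"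

end

theory Submission
  imports Defs
begin

lemma sum_fun_app: "(\<Sum>x\<in>A. f x) i = (\<Sum>x\<in>A. f x i)"
  by (induction A rule: infinite_finite_induct) auto

lemma fscale_app[simp]: "fscale c f i = c * f i"
  by (simp add: fscale_def)

lemma mapply_add: "mapply S M (x + y) = mapply S M x + mapply S M y"
  by (simp add: mapply_def fun_eq_iff distrib_left sum.distrib)

lemma mapply_diff: "mapply S M (x - y) = mapply S M x - mapply S M y"
  by (simp add: mapply_def fun_eq_iff right_diff_distrib sum_subtractf)

lemma mapply_scale: "mapply S M (fscale c x) = fscale c (mapply S M x)"
  by (simp add: mapply_def fun_eq_iff sum_distrib_left mult.left_commute)

lemma mapply_zero[simp]: "mapply S M 0 = 0"
  by (simp add: mapply_def fun_eq_iff)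

lemma mmult_col: "mmult S M N i j = mapply S M (\<lambda>k. N k j) i"
  by (simp add: mmult_def mapply_def)

lemma mapply_mmult: "mapply S M (mapply S N x) = mapply S (mmult S M N) x"
  unfolding mapply_def mmult_def fun_eq_iff
proof
  fix i
  have "(\<Sum>j\<in>S. M i j * (\<Sum>k\<in>S. N j k * x k)) = (\<Sum>j\<in>S. \<Sum>k\<in>S. M i j * N j k * x k)"
    by (simp add: sum_distrib_left mult.assoc)
  also have "\<dots> = (\<Sum>k\<in>S. \<Sum>j\<in>S. M i j * N j k * x k)" by (rule sum.swap)
  also have "\<dots> = (\<Sum>k\<in>S. (\<Sum>j\<in>S. M i j * N j k) * x k)"
    by (simp add: sum_distrib_right)
  finally show "(\<Sum>j\<in>S. M i j * (\<Sum>k\<in>S. N j k * x k)) = (\<Sum>k\<in>S. (\<Sum>j\<in>S. M i j * N j k) * x k)" .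
qed

lemma mmult_assoc: "mmult S (mmult S M N) P = mmult S M (mmult S N P)"
proof -
  have "mmult S (mmult S M N) P i j = mmult S M (mmult S N P) i j" for i j
    using fun_cong[OF mapply_mmult[of S M N "\<lambda>k. P k j"], of i]
    by (simp add: mmult_col)
  then show ?thesis by (simp add: fun_eq_iff)
qed


lemma espace_zero[simp]: "0 \<in> espace X"
  by (simp add: espace_def)
lemma espace_add: "x \<in> espace X \<Longrightarrow> y \<in> espace X \<Longrightarrow> x + y \<in> espace X"
  by (simp add: espace_def)
lemma espace_diff: "x \<in> espace X \<Longrightarrow> y \<in> espace X \<Longrightarrow> x - y \<in> espace X"
  by (simp add: espace_def)
lemma espace_scale: "x \<in> espace X \<Longrightarrow> fscale c x \<in> espace X"
  by (simp add: espace_def)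
lemma espace_mono: "x \<in> espace X \<Longrightarrow> X \<subseteq> Y \<Longrightarrow> x \<in> espace Y"
  by (auto simp add: espace_def)
lemma espaceD: "x \<in> espace X \<Longrightarrow> i \<notin> X \<Longrightarrow> x i = 0"
  by (simp add: espace_def)
lemma espaceI: "(\<And>i. i \<notin> X \<Longrightarrow> x i = 0) \<Longrightarrow> x \<in> espace X"
  by (simp add: espace_def)

lemma espace_subspace: "fvs.subspace (espace X)"
  by (simp add: fvs.subspace_def espace_def)

lemma mapply_sub: "finite S \<Longrightarrow> X \<subseteq> S \<Longrightarrow> x \<in> espace X \<Longrightarrow> mapply S M x = mapply X M x"
  unfolding mapply_def fun_eq_iff
  by (auto intro!: sum.mono_neutral_right simp: espace_def)

definition ev :: "nat \<Rightarrow> nat \<Rightarrow> 'a::field" where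
  "ev s = (\<lambda>i. if i = s then 1 else 0)"

lemma ev_espace: "s \<in> X \<Longrightarrow> ev s \<in> espace X"
  by (simp add: ev_def espace_def)

lemma mapply_ev: "s \<in> S \<Longrightarrow> finite S \<Longrightarrow> mapply S M (ev s) = (\<lambda>i. M i s)"
  unfolding mapply_def ev_def fun_eq_iff
  by (simp add: if_distrib cong: if_cong)

lemma espace_sum_ev: "finite X \<Longrightarrow> x \<in> espace X \<Longrightarrow> x = (\<Sum>s\<in>X. fscale (x s) (ev s))"
  unfolding fun_eq_iff sum_fun_app
  by (auto simp: ev_def espace_def if_distrib cong: if_cong)

lemma espace_span_ev: "finite X \<Longrightarrow> espace X \<subseteq> fvs.span (ev ` X)"
proof
  fix x assume "finite X" "x \<in> espace X"
  then have "x = (\<Sum>s\<in>X. fscale (x s) (ev s))" by (rule espace_sum_ev)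
  also have "\<dots> \<in> fvs.span (ev ` X)"
    by (intro fvs.span_sum fvs.span_scale fvs.span_base) auto
  finally show "x \<in> fvs.span (ev ` X)" .
qed

lemma span_ev_espace: "fvs.span (ev ` X) \<subseteq> espace X"
  by (rule fvs.span_minimal) (auto simp: espace_subspace ev_espace)

lemma inj_ev: "inj (ev :: nat \<Rightarrow> nat \<Rightarrow> 'a::field)"
  by (auto simp: inj_def ev_def fun_eq_iff split: if_splits)

lemma finite_dim_espace:
  assumes "finite X" "V \<subseteq> espace X"
  shows "\<exists>B. B \<subseteq> V \<and> fvs.independent B \<and> V \<subseteq> fvs.span B \<and> finite B \<and> card B = fvs.dim V"
proof -
  obtain B where B: "B \<subseteq> V" "fvs.independent B" "V \<subseteq> fvs.span B" "card B = fvs.dim V"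
    by (rule fvs.basis_exists)
  have "B \<subseteq> fvs.span (ev ` X)" using B(1) assms espace_span_ev by blast
  then have "finite B" using fvs.independent_span_bound[OF _ B(2)] assms by blast
  then show ?thesis using B by blast
qed

lemma dim_insert_step:
  assumes "finite X" "U \<subseteq> espace X" "fvs.subspace U" "U \<subseteq> V" "V \<subseteq> fvs.span (insert w U)"
    "w \<in> V" "w \<notin> U"
  shows "fvs.dim V = fvs.dim U + 1"
proof -
  obtain B where B: "B \<subseteq> U" "fvs.independent B" "U \<subseteq> fvs.span B" "finite B" "card B = fvs.dim U"
    using finite_dim_espace[OF assms(1,2)] by blast
  have spB: "fvs.span B \<subseteq> U" using B(1) assms(3) by (simp add: fvs.span_minimal)
  have wB: "w \<notin> fvs.span B" using spB assms(7) by blast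
  have "fvs.dim V = card (insert w B)"
  proof (rule fvs.dim_unique)
    show "insert w B \<subseteq> V" using B(1) assms(4,6) by blast
    have "U \<subseteq> fvs.span (insert w B)"
      using B(3) fvs.span_mono[of B "insert w B"] by blast
    then have "insert w U \<subseteq> fvs.span (insert w B)"
      using fvs.span_base[of w "insert w B"] by blast
    then have "fvs.span (insert w U) \<subseteq> fvs.span (insert w B)"
      by (rule fvs.span_minimal[OF _ fvs.subspace_span])
    then show "V \<subseteq> fvs.span (insert w B)" using assms(5) by blast
    show "fvs.independent (insert w B)" using wB B(2) by (rule fvs.independent_insertI)
  qed simp
  also have "\<dots> = card B + 1" using B(4) wB fvs.span_base[of w B] by (auto simp add: card_insert_if)
  finally show ?thesis using B(5) by simp
qed

lemma sum_delta_mult[simp]: "finite X \<Longrightarrow> (\<Sum>s\<in>X. g s * (if t = s then 1 else (0::'a::field))) = (if t \<in> X then g t else 0)"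
proof -
  have "(\<lambda>s. g s * (if t = s then 1 else (0::'a))) = (\<lambda>s. if t = s then g s else 0)" by auto
  then show "finite X \<Longrightarrow> ?thesis" by (simp only:) (simp add: sum.delta')
qed

lemma sum_delta_mult2[simp]: "finite X \<Longrightarrow> (\<Sum>s\<in>X. g s * (if s = t then 1 else (0::'a::field))) = (if t \<in> X then g t else 0)"
proof -
  have "(\<lambda>s. g s * (if s = t then 1 else (0::'a))) = (\<lambda>s. if s = t then g s else 0)" by auto
  then show "finite X \<Longrightarrow> ?thesis" by (simp only:) (simp add: sum.delta)
qed

lemma F_sum:
  assumes add: "\<And>x y. F (x + y) = F x + F y" and z: "F 0 = 0"
  shows "F (\<Sum>s\<in>X. g s) = (\<Sum>s\<in>X. F (g s))"
  by (induction X rule: infinite_finite_induct) (auto simp: add z)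

lemma inj_surj_espace:
  fixes F :: "(nat \<Rightarrow> 'a::field) \<Rightarrow> (nat \<Rightarrow> 'a)"
  assumes fin: "finite X"
    and add: "\<And>x y. F (x + y) = F x + F y"
    and sc: "\<And>c x. F (fscale c x) = fscale c (F x)"
    and into: "\<And>x. x \<in> espace X \<Longrightarrow> F x \<in> espace X"
    and inj: "inj_on F (espace X)"
  shows "espace X \<subseteq> F ` espace X"
proof -
  have z0: "fscale 0 (0::nat\<Rightarrow>'a) = 0" by (simp add: fun_eq_iff)
  have z: "F 0 = 0" using sc[of 0 0] unfolding z0 by (simp add: fun_eq_iff)
  define E :: "(nat \<Rightarrow> 'a) set" where "E = ev ` X"
  have injFe: "inj_on (\<lambda>s. F (ev s)) X"
  proof (rule inj_onI)
    fix s t assume st: "s \<in> X" "t \<in> X" "F (ev s) = F (ev t)"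
    then have "(ev s :: nat \<Rightarrow> 'a) = ev t"
      using inj ev_espace by (metis inj_onD)
    then show "s = t" using inj_ev by (metis injD)
  qed
  have FE: "F ` E = (\<lambda>s. F (ev s)) ` X" by (auto simp: E_def)
  have cardFE: "card (F ` E) = card X" using FE injFe by (simp add: card_image)
  have indep: "fvs.independent (F ` E)"
  proof (rule fvs.independent_if_scalars_zero)
    show "finite (F ` E)" using fin by (simp add: E_def)
    fix f y assume sum0: "(\<Sum>x\<in>F ` E. fscale (f x) x) = 0" and y: "y \<in> F ` E"
    then obtain t where t: "t \<in> X" "y = F (ev t)" using FE by auto
    define g where "g s = f (F (ev s))" for s
    have "(\<Sum>x\<in>F ` E. fscale (f x) x) = (\<Sum>s\<in>X. fscale (g s) (F (ev s)))"
      unfolding FE g_def by (rule sum.reindex[OF injFe, unfolded comp_def])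
    also have "\<dots> = F (\<Sum>s\<in>X. fscale (g s) (ev s))"
      by (simp add: F_sum[of F, OF add z] sc)
    finally have "F (\<Sum>s\<in>X. fscale (g s) (ev s)) = F 0" using sum0 z by simp
    moreover have "(\<Sum>s\<in>X. fscale (g s) (ev s)) \<in> espace X"
      by (auto intro!: espaceI sum.neutral simp: sum_fun_app ev_def)
    ultimately have "(\<Sum>s\<in>X. fscale (g s) (ev s)) = 0"
      using inj espace_zero by (metis inj_onD)
    then have "(\<Sum>s\<in>X. fscale (g s) (ev s)) t = 0" by simp
    then have "g t = 0" using t fin by (simp add: sum_fun_app ev_def)
    then show "f y = 0" using t by (simp add: g_def)
  qed
  have FEsub: "F ` E \<subseteq> espace X" using into ev_espace by (auto simp: E_def)
  have sp: "espace X \<subseteq> fvs.span (F ` E)"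
  proof
    fix w :: "nat \<Rightarrow> 'a" assume w: "w \<in> espace X"
    show "w \<in> fvs.span (F ` E)"
    proof (rule ccontr)
      assume nw: "w \<notin> fvs.span (F ` E)"
      then have wn: "w \<notin> F ` E" using fvs.span_base by blast
      have ind2: "fvs.independent (insert w (F ` E))" using fvs.independent_insertI[OF nw indep] .
      have "insert w (F ` E) \<subseteq> fvs.span E" using w FEsub espace_span_ev[OF fin] by (auto simp: E_def)
      then have "card (insert w (F ` E)) \<le> card E"
        using fvs.independent_span_bound[OF _ ind2] fin by (simp add: E_def)
      moreover have "card (insert w (F ` E)) = card X + 1"
        using wn cardFE fin by (simp add: E_def)
      moreover have "card E \<le> card X" using fin by (simp add: E_def card_image_le)
      ultimately show False by simp
    qed
  qed
  have subs: "fvs.subspace (F ` espace X)"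
    unfolding fvs.subspace_def
  proof (intro conjI ballI allI)
    show "0 \<in> F ` espace X" using z espace_zero by (metis image_eqI)
    fix x y assume "x \<in> F ` espace X" "y \<in> F ` espace X"
    then obtain a b where "a \<in> espace X" "b \<in> espace X" "x = F a" "y = F b" by auto
    then show "x + y \<in> F ` espace X" using add espace_add by (metis image_eqI)
  next
    fix c x assume "x \<in> F ` espace X"
    then obtain a where "a \<in> espace X" "x = F a" by auto
    then show "fscale c x \<in> F ` espace X" using sc espace_scale by (metis image_eqI)
  qed
  have "F ` E \<subseteq> F ` espace X" using ev_espace by (auto simp: E_def)
  then have "fvs.span (F ` E) \<subseteq> F ` espace X" using fvs.span_minimal subs by blast
  then show ?thesis using sp by blast
qed

definition dclosed :: "nat set \<Rightarrow> nat set \<Rightarrow> bool" where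
  "dclosed S X \<longleftrightarrow> X \<subseteq> S \<and> (\<forall>a\<in>S. \<forall>b\<in>X. a \<le> b \<longrightarrow> a \<in> X)"

definition utri :: "nat set \<Rightarrow> (nat \<Rightarrow> nat \<Rightarrow> 'a::field) \<Rightarrow> bool" where
  "utri S T \<longleftrightarrow> (\<forall>i j. T i j \<noteq> 0 \<longrightarrow> i \<in> S \<and> j \<in> S \<and> i \<le> j)"

lemma dclosed_le: "dclosed S {s\<in>S. s \<le> j}"
  by (auto simp: dclosed_def)
lemma dclosed_lt: "dclosed S {s\<in>S. s < j}"
  by (auto simp: dclosed_def)
lemma dclosed_S: "dclosed S S"
  by (auto simp: dclosed_def)

lemma utri_into:
  assumes "utri S T" "dclosed S X" "x \<in> espace X"
  shows "mapply S T x \<in> espace X"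
proof (rule espaceI)
  fix i assume i: "i \<notin> X"
  have "T i s * x s = 0" if "s \<in> S" for s
  proof (rule ccontr)
    assume "T i s * x s \<noteq> 0"
    then have "T i s \<noteq> 0" "x s \<noteq> 0" by auto
    then have "i \<in> S" "i \<le> s" "s \<in> X" using assms(1,3) by (auto simp: utri_def espace_def)
    then show False using assms(2) i by (auto simp: dclosed_def)
  qed
  then show "mapply S T x i = 0" by (auto simp: mapply_def intro!: sum.neutral)
qed

lemma midentity_apply:
  assumes "finite S" "x \<in> espace S"
  shows "mapply S (midentity S) x = x"
proof
  fix i
  have "mapply S (midentity S) x i = (\<Sum>j\<in>S. (if i = j \<and> i \<in> S then 1 else 0) * x j)"
    by (simp add: mapply_def midentity_def)
  also have "\<dots> = (\<Sum>j\<in>S. if i = j then (if i \<in> S then x j else 0) else 0)"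
    by (rule sum.cong) auto
  also have "\<dots> = x i" using assms by (simp add: sum.delta espace_def)
  finally show "mapply S (midentity S) x i = x i" .
qed

lemma inv_utri:
  assumes ut: "utri S T" and fin: "finite S" and inv: "mmult S Ti T = midentity S"
    and ij: "i \<in> S" "j \<in> S" "Ti i j \<noteq> 0"
  shows "i \<le> j"
proof -
  define X where "X = {s\<in>S. s \<le> j}"
  have XS: "X \<subseteq> S" by (auto simp: X_def)
  have finX: "finite X" using fin XS finite_subset by blast
  have bk: "mapply S Ti (mapply S T x) = x" if "x \<in> espace S" for x
    using that by (simp add: mapply_mmult inv midentity_apply fin)
  have "espace X \<subseteq> mapply S T ` espace X"
  proof (rule inj_surj_espace[OF finX])
    show "mapply S T (x + y) = mapply S T x + mapply S T y" for x y by (rule mapply_add)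
    show "mapply S T (fscale c x) = fscale c (mapply S T x)" for c x by (rule mapply_scale)
    show "x \<in> espace X \<Longrightarrow> mapply S T x \<in> espace X" for x
      using utri_into[OF ut] dclosed_le by (auto simp: X_def)
    show "inj_on (mapply S T) (espace X)"
      by (rule inj_on_inverseI[where g="mapply S Ti"]) (use bk espace_mono XS in blast)
  qed
  moreover have "ev j \<in> espace X" using ij by (auto intro: ev_espace simp: X_def)
  ultimately obtain u where u: "u \<in> espace X" "ev j = mapply S T u" by blast
  have "(\<lambda>i. Ti i j) = mapply S Ti (ev j)" by (rule mapply_ev[OF ij(2) fin, symmetric])
  also have "\<dots> = u" using u bk espace_mono XS by metis
  finally have "Ti i j = u i" by (metis)
  then have "i \<in> X" using u(1) ij(3) by (auto simp: espace_def)
  then show ?thesis by (simp add: X_def)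
qed

lemma utri_inj:
  assumes ut: "utri S T" and fin: "finite S" and diag: "\<forall>j\<in>S. T j j \<noteq> 0"
  shows "inj_on (mapply S T) (espace S)"
proof -
  have zero: "z = 0" if z: "z \<in> espace S" "mapply S T z = 0" for z
  proof (rule ccontr)
    assume "z \<noteq> 0"
    then obtain s0 where "z s0 \<noteq> 0" by (auto simp: fun_eq_iff)
    define Z where "Z = {s\<in>S. z s \<noteq> 0}"
    have Zfin: "finite Z" "Z \<noteq> {}" using fin \<open>z s0 \<noteq> 0\<close> z(1) by (auto simp: Z_def espace_def)
    define m where "m = Max Z"
    have mZ: "m \<in> Z" using Zfin by (simp add: m_def)
    have mmax: "s \<in> Z \<Longrightarrow> s \<le> m" for s using Zfin by (simp add: m_def)
    have "mapply S T z m = (\<Sum>s\<in>S. if s = m then T m m * z m else 0)"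
      unfolding mapply_def
    proof (rule sum.cong[OF refl])
      fix s assume s: "s \<in> S"
      show "T m s * z s = (if s = m then T m m * z m else 0)"
      proof (cases "s = m")
        case True then show ?thesis by simp
      next
        case False
        have "T m s = 0 \<or> z s = 0"
        proof (rule ccontr)
          assume "\<not> (T m s = 0 \<or> z s = 0)"
          then have "T m s \<noteq> 0" "z s \<noteq> 0" by auto
          then have "m \<le> s" "s \<in> Z" using ut s by (auto simp: utri_def Z_def)
          then have "s \<le> m" using mmax by auto
          then show False using \<open>m \<le> s\<close> False by simp
        qed
        then show ?thesis using False by auto
      qed
    qed
    also have "\<dots> = T m m * z m" using mZ fin by (simp add: Z_def)
    also have "\<dots> \<noteq> 0" using mZ diag by (simp add: Z_def)
    finally show False using z(2) by simp
  qed
  show ?thesis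
  proof (rule inj_onI)
    fix x y assume "x \<in> espace S" "y \<in> espace S" "mapply S T x = mapply S T y"
    then have "x - y = 0" using zero[of "x - y"] by (simp add: espace_diff mapply_diff)
    then show "x = y" by simp
  qed
qed

lemma utri_inverse_exists:
  assumes ut: "utri S T" and fin: "finite S" and diag: "\<forall>j\<in>S. T j j \<noteq> 0"
  shows "\<exists>Ti. mmult S T Ti = midentity S \<and> mmult S Ti T = midentity S"
proof -
  have inj: "inj_on (mapply S T) (espace S)" by (rule utri_inj[OF ut fin diag])
  have surj: "espace S \<subseteq> mapply S T ` espace S"
  proof (rule inj_surj_espace[OF fin])
    show "mapply S T (x + y) = mapply S T x + mapply S T y" for x y by (rule mapply_add)
    show "mapply S T (fscale c x) = fscale c (mapply S T x)" for c x by (rule mapply_scale)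
    show "x \<in> espace S \<Longrightarrow> mapply S T x \<in> espace S" for x
      using utri_into[OF ut dclosed_S] by auto
  qed (rule inj)
  define u where "u j = (SOME u. u \<in> espace S \<and> mapply S T u = ev j)" for j
  have u: "u j \<in> espace S \<and> mapply S T (u j) = ev j" if "j \<in> S" for j
  proof -
    have "ev j \<in> espace S" using that by (rule ev_espace)
    then obtain v where "v \<in> espace S" "ev j = mapply S T v" using surj by blast
    then show ?thesis unfolding u_def by (metis (mono_tags, lifting) someI)
  qed
  define Ti where "Ti i j = (if j \<in> S then u j i else 0)" for i j
  have colTi: "(\<lambda>k. Ti k j) = (if j \<in> S then u j else 0)" for j
    by (auto simp: Ti_def fun_eq_iff)
  have TTi: "mmult S T Ti = midentity S"
  proof (intro ext)
    fix i j
    show "mmult S T Ti i j = midentity S i j"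
      unfolding mmult_col colTi
      using u[of j] by (auto simp: midentity_def ev_def)
  qed
  have Tisp: "mapply S Ti y \<in> espace S" for y
    by (rule espaceI) (auto simp: mapply_def Ti_def espaceD[OF conjunct1[OF u]] intro!: sum.neutral)
  have TiT: "mmult S Ti T = midentity S"
  proof (intro ext)
    fix i j
    show "mmult S Ti T i j = midentity S i j"
    proof (cases "j \<in> S")
      case False
      then have "(\<lambda>k. T k j) = 0" using ut by (auto simp: utri_def fun_eq_iff)
      then show ?thesis using False by (simp add: mmult_col midentity_def)
    next
      case True
      have cT: "(\<lambda>k. T k j) = mapply S T (ev j)" by (rule mapply_ev[OF True fin, symmetric])
      have ej: "ev j \<in> espace S" using True by (rule ev_espace)
      have Tej: "mapply S T (ev j) \<in> espace S" using utri_into[OF ut dclosed_S ej] .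
      have "mapply S T (mapply S Ti (mapply S T (ev j))) = mapply S T (ev j)"
        unfolding mapply_mmult[of S T Ti] TTi by (rule midentity_apply[OF fin Tej])
      then have "mapply S Ti (mapply S T (ev j)) = ev j"
        using inj Tisp ej by (meson inj_onD)
      then show ?thesis using True cT
        by (simp add: mmult_col midentity_def ev_def)
    qed
  qed
  show ?thesis using TTi TiT by blast
qed

definition good :: "nat set \<Rightarrow> (nat \<Rightarrow> int) \<Rightarrow> (nat \<Rightarrow> nat \<Rightarrow> 'a::field) \<Rightarrow> (nat \<Rightarrow> nat \<Rightarrow> 'a) \<Rightarrow> (nat \<Rightarrow> nat \<Rightarrow> 'a) \<Rightarrow> bool" where
  "good S deg D T E \<longleftrightarrow> utri S T \<and> (\<forall>i j. T i j \<noteq> 0 \<longrightarrow> deg i = deg j) \<and> (\<forall>j\<in>S. T j j \<noteq> 0)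
     \<and> mmult S D T = mmult S T E \<and> is_elementary S deg E"

definition proj :: "(nat \<Rightarrow> int) \<Rightarrow> int \<Rightarrow> (nat \<Rightarrow> 'a::field) \<Rightarrow> (nat \<Rightarrow> 'a)" where
  "proj deg k x = (\<lambda>i. if deg i = k then x i else 0)"

lemma proj_mapply:
  assumes "\<forall>i j. T i j \<noteq> 0 \<longrightarrow> deg i = deg j + d"
  shows "mapply S T (proj deg k x) = proj deg (k + d) (mapply S T x)"
  unfolding fun_eq_iff mapply_def proj_def
proof
  fix i
  show "(\<Sum>j\<in>S. T i j * (if deg j = k then x j else 0)) = (if deg i = k + d then \<Sum>j\<in>S. T i j * x j else 0)"
  proof (cases "deg i = k + d")
    case True
    have eq: "T i j * (if deg j = k then x j else 0) = T i j * x j" for j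
      using assms True by (cases "T i j = 0") auto
    have "(\<Sum>j\<in>S. T i j * (if deg j = k then x j else 0)) = (\<Sum>j\<in>S. T i j * x j)"
      by (rule sum.cong[OF refl eq])
    then show ?thesis using True by simp
  next
    case False
    have eq: "T i j * (if deg j = k then x j else 0) = 0" for j
      using assms False by (cases "T i j = 0") auto
    have "(\<Sum>j\<in>S. T i j * (if deg j = k then x j else 0)) = 0"
      by (rule sum.neutral) (simp add: eq)
    then show ?thesis using False by simp
  qed
qed

lemma proj_espace: "x \<in> espace X \<Longrightarrow> proj deg k x \<in> espace X"
  by (simp add: proj_def espace_def)

lemma proj_id: "(\<forall>i. x i \<noteq> 0 \<longrightarrow> deg i = k) \<Longrightarrow> proj deg k x = x"
  by (auto simp: proj_def fun_eq_iff)

lemma elem_col: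
  assumes "is_elementary S deg E" "E i j \<noteq> 0"
  shows "i \<in> S \<and> j \<in> S \<and> E i j = 1 \<and> (\<forall>i'. i' \<noteq> i \<longrightarrow> E i' j = 0)"
proof -
  have ij: "i \<in> S" "j \<in> S" using assms by (auto simp: is_elementary_def is_Mdiff_def)
  then obtain i0 where "i0 \<in> S" "E i0 j = 1" "\<forall>i'. i' \<noteq> i0 \<longrightarrow> E i' j = 0"
    using assms by (auto simp: is_elementary_def)
  then show ?thesis using ij assms(2) by (metis)
qed

lemma elem_inj:
  assumes "is_elementary S deg E" "E i j \<noteq> 0" "E i j' \<noteq> 0"
  shows "j = j'"
proof -
  have "\<forall>i j j'. j \<in> S \<longrightarrow> j' \<in> S \<longrightarrow> E i j \<noteq> 0 \<longrightarrow> E i j' \<noteq> 0 \<longrightarrow> j = j'"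
    using assms(1) by (simp add: is_elementary_def)
  then show ?thesis using elem_col[OF assms(1,2)] elem_col[OF assms(1,3)] assms(2,3) by blast
qed

lemma elem_col_apply1:
  assumes "is_elementary S deg E" "E i j \<noteq> 0" "finite S"
  shows "mapply S T (\<lambda>k. E k j) = (\<lambda>r. T r i)"
proof -
  have "(\<lambda>k. E k j) = ev i" using elem_col[OF assms(1,2)] by (auto simp: ev_def fun_eq_iff)
  then show ?thesis using elem_col[OF assms(1,2)] mapply_ev[OF _ assms(3), of i T] by simp
qed

lemma elem_col_apply0:
  assumes "\<forall>i. E i j = 0"
  shows "mapply S T (\<lambda>k. E k j) = 0"
  using assms by (simp add: mapply_def fun_eq_iff)

lemma mdiff_restrict:
  assumes "is_Mdiff S deg D" "S' \<subseteq> S" "\<forall>a\<in>S. \<forall>b\<in>S'. a < b \<longrightarrow> a \<in> S'"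
  shows "is_Mdiff S' deg (mrestrict S' D)"
proof -
  have fin: "finite S" "finite S'" using assms finite_subset by (auto simp: is_Mdiff_def)
  have "mmult S' (mrestrict S' D) (mrestrict S' D) i j = 0" for i j
  proof (cases "i \<in> S' \<and> j \<in> S'")
    case True
    have "mmult S' (mrestrict S' D) (mrestrict S' D) i j = (\<Sum>k\<in>S'. D i k * D k j)"
      using True by (simp add: mmult_def mrestrict_def)
    also have "\<dots> = (\<Sum>k\<in>S. D i k * D k j)"
    proof (rule sum.mono_neutral_left[OF fin(1) assms(2)])
      show "\<forall>k\<in>S - S'. D i k * D k j = 0"
      proof
        fix k assume k: "k \<in> S - S'"
        show "D i k * D k j = 0"
        proof (rule ccontr)
          assume "D i k * D k j \<noteq> 0"
          then have "D k j \<noteq> 0" by simp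
          then have "k < j" using assms(1) by (auto simp: is_Mdiff_def)
          then show False using assms(3) k True by blast
        qed
      qed
    qed
    also have "\<dots> = mmult S D D i j" by (simp add: mmult_def)
    also have "\<dots> = 0" using assms(1) by (simp add: is_Mdiff_def)
    finally show ?thesis .
  next
    case False
    then show ?thesis by (auto simp: mmult_def mrestrict_def intro!: sum.neutral)
  qed
  then have "mmult S' (mrestrict S' D) (mrestrict S' D) = (\<lambda>i j. 0)" by (simp add: fun_eq_iff)
  moreover have "\<forall>i j. mrestrict S' D i j \<noteq> 0 \<longrightarrow> i \<in> S' \<and> j \<in> S' \<and> i < j \<and> deg i = deg j - 1"
    using assms(1) by (auto simp: is_Mdiff_def mrestrict_def)
  ultimately show ?thesis using fin by (simp add: is_Mdiff_def)
qed

lemma elementary_extend: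
  assumes "is_elementary S' deg E" "S' \<subseteq> S" "finite S"
  shows "is_elementary S deg E"
proof -
  have supp: "E i j \<noteq> 0 \<Longrightarrow> i \<in> S' \<and> j \<in> S'" for i j using assms(1) by (auto simp: is_elementary_def is_Mdiff_def)
  have "mmult S E E = mmult S' E E"
    unfolding mmult_def fun_eq_iff
  proof (intro allI)
    fix i j
    show "(\<Sum>k\<in>S. E i k * E k j) = (\<Sum>k\<in>S'. E i k * E k j)"
      by (rule sum.mono_neutral_right[OF assms(3) assms(2)]) (use supp in auto)
  qed
  moreover have "finite S" by (rule assms(3))
  moreover have "\<forall>i j. E i j \<noteq> 0 \<longrightarrow> i \<in> S \<and> j \<in> S \<and> i < j \<and> deg i = deg j - 1"
    using assms(1,2) by (auto simp: is_elementary_def is_Mdiff_def)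
  moreover have "\<forall>j\<in>S. (\<forall>i. E i j = 0) \<or> (\<exists>i\<in>S. E i j = 1 \<and> (\<forall>i'. i' \<noteq> i \<longrightarrow> E i' j = 0))"
  proof
    fix j assume "j \<in> S"
    show "(\<forall>i. E i j = 0) \<or> (\<exists>i\<in>S. E i j = 1 \<and> (\<forall>i'. i' \<noteq> i \<longrightarrow> E i' j = 0))"
    proof (cases "\<forall>i. E i j = 0")
      case False
      then obtain i where "E i j \<noteq> 0" by auto
      then show ?thesis using elem_col[OF assms(1)] assms(2) by blast
    qed simp
  qed
  moreover have "\<forall>i j j'. j \<in> S \<longrightarrow> j' \<in> S \<longrightarrow> E i j \<noteq> 0 \<longrightarrow> E i j' \<noteq> 0 \<longrightarrow> j = j'"
    using elem_inj[OF assms(1)] by blast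
  ultimately show ?thesis using assms(1) by (simp add: is_elementary_def is_Mdiff_def)
qed

context
  fixes S' :: "nat set" and m :: nat and deg :: "nat \<Rightarrow> int" and D T' E' :: "nat \<Rightarrow> nat \<Rightarrow> 'a::field"
  assumes finS': "finite S'" and mlt: "\<forall>s\<in>S'. s < m"
    and Md: "is_Mdiff (insert m S') deg D"
    and gd: "good S' deg (mrestrict S' D) T' E'"
begin

lemma st_mnot: "m \<notin> S'" using mlt by blast
lemma st_fin: "finite (insert m S')" using finS' by simp

lemma D_supp: "D i j \<noteq> 0 \<Longrightarrow> i \<in> insert m S' \<and> j \<in> insert m S' \<and> i < j \<and> deg i = deg j - 1"
  using Md by (auto simp: is_Mdiff_def)

lemma D_mrow: "D m j = 0"
proof (rule ccontr)
  assume "D m j \<noteq> 0"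
  then have "m < j" "j \<in> insert m S'" using D_supp by auto
  then show False using mlt by auto
qed

lemma DD0: "mmult (insert m S') D D = (\<lambda>i j. 0)" using Md by (simp add: is_Mdiff_def)

lemma T'ut: "utri S' T'" and T'deg: "\<And>i j. T' i j \<noteq> 0 \<Longrightarrow> deg i = deg j"
  and T'diag: "\<And>j. j \<in> S' \<Longrightarrow> T' j j \<noteq> 0"
  and T'E'eq: "mmult S' (mrestrict S' D) T' = mmult S' T' E'"
  and E'el: "is_elementary S' deg E'"
  using gd by (auto simp: good_def)

lemma E'supp: "E' i j \<noteq> 0 \<Longrightarrow> i \<in> S' \<and> j \<in> S' \<and> i < j \<and> deg i = deg j - 1"
  using E'el by (auto simp: is_elementary_def is_Mdiff_def)

lemma T'supp: "T' i j \<noteq> 0 \<Longrightarrow> i \<in> S' \<and> j \<in> S' \<and> i \<le> j"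
  using T'ut by (auto simp: utri_def)

lemma D_on_S':
  assumes "x \<in> espace S'"
  shows "mapply (insert m S') D x = mapply S' (mrestrict S' D) x"
proof -
  have "mapply (insert m S') D x = mapply S' D x"
    using mapply_sub[OF st_fin _ assms] by auto
  also have "\<dots> = mapply S' (mrestrict S' D) x"
    unfolding mapply_def fun_eq_iff
  proof
    fix i
    show "(\<Sum>j\<in>S'. D i j * x j) = (\<Sum>j\<in>S'. mrestrict S' D i j * x j)"
    proof (cases "i \<in> S'")
      case True then show ?thesis by (auto simp: mrestrict_def intro!: sum.cong)
    next
      case False
      have "D i j = 0" if "j \<in> S'" for j
        using D_supp[of i j] D_mrow False that by (cases "i = m") auto
      then show ?thesis using False by (auto simp: mrestrict_def intro!: sum.neutral)
    qed
  qed
  finally show ?thesis .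
qed

lemma T'into: "x \<in> espace S' \<Longrightarrow> mapply S' T' x \<in> espace S'"
  using utri_into[OF T'ut dclosed_S] by blast

lemma E'into: "mapply S' E' x \<in> espace S'"
proof (rule espaceI)
  fix i assume i: "i \<notin> S'"
  have "E' i j = 0" for j using E'supp[of i j] i by auto
  then show "mapply S' E' x i = 0" by (simp add: mapply_def)
qed

lemma T'inj: "inj_on (mapply S' T') (espace S')"
  using utri_inj[OF T'ut finS'] T'diag by blast

lemma T'surj: "espace S' \<subseteq> mapply S' T' ` espace S'"
proof (rule inj_surj_espace[OF finS'])
  show "mapply S' T' (x + y) = mapply S' T' x + mapply S' T' y" for x y by (rule mapply_add)
  show "mapply S' T' (fscale c x) = fscale c (mapply S' T' x)" for c x by (rule mapply_scale)
qed (use T'into T'inj in auto)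

lemma DT': "mapply S' (mrestrict S' D) (mapply S' T' x) = mapply S' T' (mapply S' E' x)"
  by (simp add: mapply_mmult T'E'eq)

definition vv where "vv = (\<lambda>i. D i m)"

lemma vv_esp: "vv \<in> espace S'"
  by (rule espaceI) (use D_supp in \<open>force simp: vv_def\<close>)

lemma vv_deg: "vv i \<noteq> 0 \<Longrightarrow> deg i = deg m - 1"
  using D_supp by (simp add: vv_def)

lemma vv_cycle: "mapply S' (mrestrict S' D) vv = 0"
proof -
  have "mapply S' (mrestrict S' D) vv = mapply (insert m S') D vv"
    using D_on_S'[OF vv_esp] by simp
  also have "\<dots> = (\<lambda>i. mmult (insert m S') D D i m)"
    by (simp add: mapply_def mmult_def vv_def)
  also have "\<dots> = 0" using DD0 by (simp add: fun_eq_iff)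
  finally show ?thesis .
qed

lemma exists_c: "\<exists>c. c \<in> espace S' \<and> mapply S' T' c = vv \<and> (\<forall>i. c i \<noteq> 0 \<longrightarrow> deg i = deg m - 1)"
proof -
  obtain c0 where c0: "c0 \<in> espace S'" "vv = mapply S' T' c0" using T'surj vv_esp by blast
  define c where "c = proj deg (deg m - 1) c0"
  have "mapply S' T' c = proj deg (deg m - 1 + 0) (mapply S' T' c0)"
    unfolding c_def by (rule proj_mapply) (use T'deg in auto)
  also have "\<dots> = vv" using c0(2)[symmetric] proj_id[of vv deg "deg m - 1"] vv_deg by auto
  finally have "mapply S' T' c = vv" .
  moreover have "c \<in> espace S'" unfolding c_def by (rule proj_espace[OF c0(1)])
  moreover have "\<forall>i. c i \<noteq> 0 \<longrightarrow> deg i = deg m - 1" by (simp add: c_def proj_def)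
  ultimately show ?thesis by blast
qed


lemma sum_nz: "mapply S M x i \<noteq> 0 \<Longrightarrow> \<exists>s\<in>S. M i s \<noteq> 0 \<and> x s \<noteq> 0"
  unfolding mapply_def by (metis (mono_tags, lifting) mult_zero_left mult_zero_right sum.neutral)

lemma E'ext: "is_elementary (insert m S') deg E'"
  using elementary_extend[OF E'el _ st_fin] by blast

lemma col_S':
  assumes j: "j \<in> S'"
  shows "mapply (insert m S') D (\<lambda>i. T' i j) = mapply S' T' (\<lambda>k. E' k j)"
proof -
  have "(\<lambda>i. T' i j) \<in> espace S'" by (rule espaceI) (use T'supp in blast)
  then have "mapply (insert m S') D (\<lambda>i. T' i j) = mapply S' (mrestrict S' D) (\<lambda>i. T' i j)"
    by (rule D_on_S')
  also have "\<dots> = (\<lambda>i. mmult S' (mrestrict S' D) T' i j)" by (simp add: mmult_col)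
  also have "\<dots> = (\<lambda>i. mmult S' T' E' i j)" by (simp add: T'E'eq)
  also have "\<dots> = mapply S' T' (\<lambda>k. E' k j)" by (simp add: mmult_col)
  finally show ?thesis .
qed

lemma T_E'col:
  assumes colT: "\<And>s. s \<in> S' \<Longrightarrow> s \<noteq> r \<Longrightarrow> (\<lambda>i. T i s) = (\<lambda>i. T' i s)"
    and rnl: "\<And>j. E' r j = 0"
  shows "mapply (insert m S') T (\<lambda>k. E' k j) = mapply S' T' (\<lambda>k. E' k j)"
proof (cases "\<forall>k. E' k j = 0")
  case True
  then show ?thesis by (simp add: mapply_def)
next
  case False
  then obtain p where p: "E' p j \<noteq> 0" by auto
  have "p \<in> S'" "p \<noteq> r" using E'supp[OF p] p rnl by auto
  then show ?thesis
    using elem_col_apply1[OF E'ext p st_fin] elem_col_apply1[OF E'el p finS'] colT by simp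
qed

context
  fixes c :: "nat \<Rightarrow> 'a"
  assumes c_esp: "c \<in> espace S'" and c_T: "mapply S' T' c = vv"
    and c_deg: "\<And>i. c i \<noteq> 0 \<Longrightarrow> deg i = deg m - 1"
begin

lemma E'c0: "mapply S' E' c = 0"
proof -
  have "mapply S' T' (mapply S' E' c) = mapply S' T' 0"
    using DT'[of c] c_T vv_cycle by simp
  then show ?thesis using T'inj E'into espace_zero by (meson inj_onD)
qed

lemma c_up:
  assumes "E' i j \<noteq> 0"
  shows "c j = 0"
proof -
  have ec: "E' i j = 1" "j \<in> S'" using elem_col[OF E'el assms] by auto
  have "mapply S' E' c i = (\<Sum>s\<in>S'. if s = j then c j else 0)"
    unfolding mapply_def
  proof (rule sum.cong[OF refl])
    fix s assume "s \<in> S'"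
    show "E' i s * c s = (if s = j then c j else 0)"
      using elem_inj[OF E'el assms, of s] ec by (cases "E' i s = 0") auto
  qed
  also have "\<dots> = c j" using ec finS' by simp
  finally show ?thesis using E'c0 by (simp add: fun_eq_iff)
qed

definition low where "low i \<longleftrightarrow> (\<exists>j. E' i j \<noteq> 0)"
definition ww where "ww = (\<lambda>u. \<Sum>i\<in>S'. E' i u * c i)"
definition cL where "cL = (\<lambda>i. if low i then c i else 0)"
definition cR where "cR = (\<lambda>i. if low i then 0 else c i)"

lemma c_split: "c = cL + cR"
  by (simp add: cL_def cR_def fun_eq_iff)

lemma cL_esp: "cL \<in> espace S'" using c_esp by (simp add: cL_def espace_def)
lemma cR_esp: "cR \<in> espace S'" using c_esp by (simp add: cR_def espace_def)

lemma ww_esp: "ww \<in> espace S'"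
proof (rule espaceI)
  fix u assume "u \<notin> S'"
  then have "E' i u = 0" for i using E'supp[of i u] by auto
  then show "ww u = 0" by (simp add: ww_def)
qed

lemma ww_deg: "ww u \<noteq> 0 \<Longrightarrow> deg u = deg m"
proof -
  assume "ww u \<noteq> 0"
  then obtain i where "E' i u * c i \<noteq> 0" unfolding ww_def by (metis (mono_tags, lifting) sum.neutral)
  then have "E' i u \<noteq> 0" "c i \<noteq> 0" by auto
  then show "deg u = deg m" using E'supp c_deg by fastforce
qed

lemma E'ww: "mapply S' E' ww = cL"
proof
  fix i
  show "mapply S' E' ww i = cL i"
  proof (cases "low i")
    case False
    then have "E' i u = 0" for u by (simp add: low_def)
    then show ?thesis using False by (simp add: mapply_def cL_def)
  next
    case True
    then obtain u0 where u0: "E' i u0 \<noteq> 0" by (auto simp: low_def)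
    have ec: "E' i u0 = 1" "u0 \<in> S'" "i \<in> S'" "\<And>i'. i' \<noteq> i \<Longrightarrow> E' i' u0 = 0"
      using elem_col[OF E'el u0] by auto
    have "ww u0 = (\<Sum>i'\<in>S'. if i' = i then c i else 0)"
      unfolding ww_def by (rule sum.cong[OF refl]) (use ec in auto)
    also have "\<dots> = c i" using ec finS' by simp
    finally have wu0: "ww u0 = c i" .
    have "mapply S' E' ww i = (\<Sum>u\<in>S'. if u = u0 then c i else 0)"
      unfolding mapply_def
    proof (rule sum.cong[OF refl])
      fix u assume "u \<in> S'"
      show "E' i u * ww u = (if u = u0 then c i else 0)"
        using elem_inj[OF E'el u0, of u] ec wu0 by (cases "E' i u = 0") auto
    qed
    also have "\<dots> = c i" using ec finS' by simp
    finally show ?thesis using True by (simp add: cL_def)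
  qed
qed

lemma E'cR: "mapply S' E' cR = 0"
proof
  fix i
  have h: "E' i s * cR s = 0" for s
    using c_up[of i s] by (cases "E' i s = 0") (auto simp: cR_def)
  show "mapply S' E' cR i = 0 i" by (simp add: mapply_def h)
qed

lemma Dm_col: "mapply (insert m S') D (ev m - mapply S' T' ww) = mapply S' T' cR"
proof -
  have "mapply (insert m S') D (ev m) = vv"
    using mapply_ev[OF _ st_fin, of m D] by (simp add: vv_def)
  moreover have "mapply (insert m S') D (mapply S' T' ww) = mapply S' T' cL"
    using D_on_S'[OF T'into[OF ww_esp]] DT'[of ww] E'ww by simp
  moreover have "vv = mapply S' T' cL + mapply S' T' cR"
    using c_T c_split mapply_add by metis
  ultimately show ?thesis by (simp add: mapply_diff)
qed


lemma mapply_zero': "mapply S M (\<lambda>k. 0) = 0"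
  by (simp add: mapply_def fun_eq_iff)

lemma T'ww_nz: "(ev m - mapply S' T' ww) i \<noteq> 0 \<Longrightarrow> i = m \<or> (i \<in> S' \<and> i < m \<and> deg i = deg m)"
proof -
  assume h: "(ev m - mapply S' T' ww) i \<noteq> 0"
  show ?thesis
  proof (cases "i = m")
    case False
    then have "mapply S' T' ww i \<noteq> 0" using h by (simp add: ev_def)
    then obtain s where s: "s \<in> S'" "T' i s \<noteq> 0" "ww s \<noteq> 0" using sum_nz by blast
    have "i \<in> S'" using T'supp[OF s(2)] by simp
    moreover have "deg i = deg m" using T'deg[OF s(2)] ww_deg[OF s(3)] by simp
    ultimately show ?thesis using mlt by auto
  qed simp
qed

lemma T'ww_m: "(ev m - mapply S' T' ww) m = 1"
  using espaceD[OF T'into[OF ww_esp] st_mnot] by (simp add: ev_def)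

lemma caseA:
  assumes cR0: "\<forall>r. cR r = 0"
  shows "\<exists>T E. good (insert m S') deg D T E"
proof -
  define tm where "tm = ev m - mapply S' T' ww"
  define T where "T = (\<lambda>i j. if j = m then tm i else T' i j)"
  have ut: "utri (insert m S') T"
    unfolding utri_def
  proof (intro allI impI)
    fix i j assume "T i j \<noteq> 0"
    then show "i \<in> insert m S' \<and> j \<in> insert m S' \<and> i \<le> j"
      using T'ww_nz[of i] T'supp[of i j] by (auto simp: T_def tm_def split: if_splits)
  qed
  have dg: "\<forall>i j. T i j \<noteq> 0 \<longrightarrow> deg i = deg j"
    using T'ww_nz T'deg by (auto simp: T_def tm_def split: if_splits)
  have diag: "\<forall>j\<in>insert m S'. T j j \<noteq> 0"
    using T'ww_m T'diag st_mnot by (auto simp: T_def tm_def)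
  have cols: "mapply (insert m S') D (\<lambda>i. T i j) = mapply (insert m S') T (\<lambda>k. E' k j)" for j
  proof (cases "j = m")
    case True
    have "cR = (\<lambda>k. 0)" using cR0 by auto
    have cm: "(\<lambda>i. T i j) = ev m - mapply S' T' ww" using True by (simp add: T_def tm_def fun_eq_iff)
    have "mapply (insert m S') D (\<lambda>i. T i j) = mapply S' T' cR"
      unfolding cm by (rule Dm_col)
    then have "mapply (insert m S') D (\<lambda>i. T i j) = 0"
      using \<open>cR = (\<lambda>k. 0)\<close> by (simp add: mapply_zero')
    moreover have "(\<lambda>k. E' k j) = (\<lambda>k. 0)" using E'supp True st_mnot by auto
    ultimately show ?thesis by (simp add: mapply_zero')
  next
    case False
    then have cT: "(\<lambda>i. T i j) = (\<lambda>i. T' i j)" by (simp add: T_def)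
    show ?thesis
    proof (cases "j \<in> S'")
      case True
      have "mapply (insert m S') T (\<lambda>k. E' k j) = mapply S' T' (\<lambda>k. E' k j)"
        by (rule T_E'col[where r = m]) (use st_mnot E'supp in \<open>auto simp: T_def\<close>)
      then show ?thesis using col_S'[OF True] cT by simp
    next
      case False
      have "(\<lambda>i. T' i j) = (\<lambda>k. 0)" using T'supp False by auto
      moreover have "(\<lambda>k. E' k j) = (\<lambda>k. 0)" using E'supp False by auto
      ultimately show ?thesis using cT by (simp add: mapply_zero')
    qed
  qed
  have "mmult (insert m S') D T = mmult (insert m S') T E'"
    by (intro ext) (simp only: mmult_col cols)
  then have "good (insert m S') deg D T E'"
    using ut dg diag E'ext by (simp add: good_def)
  then show ?thesis by blast
qed

lemma caseB:
  assumes r0: "r0 \<in> S'" "cR r0 \<noteq> 0" and r0max: "\<forall>r\<in>S'. cR r \<noteq> 0 \<longrightarrow> r \<le> r0"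
  shows "\<exists>T E. good (insert m S') deg D T E"
proof -
  define a where "a = cR r0"
  have a0: "a \<noteq> 0" using r0 by (simp add: a_def)
  have nl: "\<And>j. E' r0 j = 0" using r0(2) by (auto simp: cR_def low_def split: if_splits)
  have cr0: "c r0 = a" using nl by (simp add: a_def cR_def low_def)
  have degr0: "deg r0 = deg m - 1" using c_deg[of r0] cr0 a0 by simp
  have nu: "\<And>i. E' i r0 = 0" using c_up cr0 a0 by blast
  have r0m: "r0 \<noteq> m" "r0 < m" using r0 mlt by auto
  define tm where "tm = fscale (1/a) (ev m - mapply S' T' ww)"
  define g where "g = fscale (1/a) (mapply S' T' cR)"
  define T where "T = (\<lambda>i j. if j = m then tm i else if j = r0 then g i else T' i j)"
  define E where "E = (\<lambda>i j. if j = m then (if i = r0 then 1 else 0) else E' i j)"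
  have g_nz: "g i \<noteq> 0 \<Longrightarrow> i \<in> S' \<and> i \<le> r0 \<and> deg i = deg r0" for i
  proof -
    assume "g i \<noteq> 0"
    then have "mapply S' T' cR i \<noteq> 0" by (simp add: g_def)
    then obtain s where s: "s \<in> S'" "T' i s \<noteq> 0" "cR s \<noteq> 0" using sum_nz by blast
    have "c s \<noteq> 0" using s(3) by (simp add: cR_def split: if_splits)
    then show ?thesis using T'supp[OF s(2)] T'deg[OF s(2)] r0max s c_deg[of s] degr0 by force
  qed
  have tm_nz: "tm i \<noteq> 0 \<Longrightarrow> i = m \<or> (i \<in> S' \<and> i < m \<and> deg i = deg m)" for i
    using T'ww_nz[of i] by (simp add: tm_def)
  have ut: "utri (insert m S') T"
    unfolding utri_def
  proof (intro allI impI)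
    fix i j assume "T i j \<noteq> 0"
    then show "i \<in> insert m S' \<and> j \<in> insert m S' \<and> i \<le> j"
      using tm_nz[of i] g_nz[of i] T'supp[of i j] r0 r0m by (auto simp: T_def split: if_splits)
  qed
  have dg: "\<forall>i j. T i j \<noteq> 0 \<longrightarrow> deg i = deg j"
    using tm_nz g_nz T'deg by (auto simp: T_def split: if_splits)
  have gr0: "g r0 = T' r0 r0"
  proof -
    have "mapply S' T' cR r0 = (\<Sum>s\<in>S'. if s = r0 then T' r0 r0 * a else 0)"
      unfolding mapply_def
    proof (rule sum.cong[OF refl])
      fix s assume s: "s \<in> S'"
      show "T' r0 s * cR s = (if s = r0 then T' r0 r0 * a else 0)"
      proof (cases "s = r0")
        case False
        have "T' r0 s = 0 \<or> cR s = 0"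
        proof (rule ccontr)
          assume "\<not> (T' r0 s = 0 \<or> cR s = 0)"
          then have "r0 \<le> s" "s \<le> r0" using T'supp[of r0 s] r0max s by auto
          then show False using False by simp
        qed
        then show ?thesis using False by auto
      qed (simp add: a_def)
    qed
    also have "\<dots> = T' r0 r0 * a" using r0 finS' by simp
    finally show ?thesis using a0 by (simp add: g_def)
  qed
  have diag: "\<forall>j\<in>insert m S'. T j j \<noteq> 0"
    using T'ww_m T'diag gr0 r0 r0m a0 by (auto simp: T_def tm_def)
  have colm: "(\<lambda>i. T i m) = fscale (1/a) (ev m - mapply S' T' ww)" by (simp add: T_def tm_def fun_eq_iff)
  have colr0: "(\<lambda>i. T i r0) = g" using r0m by (simp add: T_def fun_eq_iff)
  have cols: "mapply (insert m S') D (\<lambda>i. T i j) = mapply (insert m S') T (\<lambda>k. E k j)" for j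
  proof (cases "j = m")
    case True
    have "mapply (insert m S') D (\<lambda>i. T i j) = g"
      unfolding True colm mapply_scale Dm_col g_def ..
    moreover have "(\<lambda>k. E k j) = ev r0" using True by (simp add: E_def ev_def fun_eq_iff)
    moreover have "mapply (insert m S') T (ev r0) = g"
      using mapply_ev[OF _ st_fin, of r0 T] r0 colr0 by simp
    ultimately show ?thesis by simp
  next
    case False
    then have cE: "(\<lambda>k. E k j) = (\<lambda>k. E' k j)" by (simp add: E_def)
    show ?thesis
    proof (cases "j = r0")
      case True
      have "mapply (insert m S') D g = fscale (1/a) (mapply S' (mrestrict S' D) (mapply S' T' cR))"
        unfolding g_def mapply_scale using D_on_S'[OF T'into[OF cR_esp]] by simp
      also have "\<dots> = 0" using DT'[of cR] E'cR by (simp add: fun_eq_iff)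
      finally have "mapply (insert m S') D (\<lambda>i. T i j) = 0" using True colr0 by simp
      moreover have "(\<lambda>k. E k j) = (\<lambda>k. 0)" using cE True nu by simp
      ultimately show ?thesis by (simp add: mapply_zero')
    next
      case False2: False
      then have cT: "(\<lambda>i. T i j) = (\<lambda>i. T' i j)" using False by (simp add: T_def)
      show ?thesis
      proof (cases "j \<in> S'")
        case True
        have "mapply (insert m S') T (\<lambda>k. E' k j) = mapply S' T' (\<lambda>k. E' k j)"
          by (rule T_E'col[where r = r0]) (use st_mnot nl in \<open>auto simp: T_def\<close>)
        then show ?thesis using col_S'[OF True] cT cE by simp
      next
        case False3: False
        have "(\<lambda>i. T' i j) = (\<lambda>k. 0)" using T'supp False3 by auto
        moreover have "(\<lambda>k. E' k j) = (\<lambda>k. 0)" using E'supp False3 by auto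
        ultimately show ?thesis using cT cE by (simp add: mapply_zero')
      qed
    qed
  qed
  have mm: "mmult (insert m S') D T = mmult (insert m S') T E"
    by (intro ext) (simp only: mmult_col cols)
  have Esupp: "\<forall>i j. E i j \<noteq> 0 \<longrightarrow> i \<in> insert m S' \<and> j \<in> insert m S' \<and> i < j \<and> deg i = deg j - 1"
    using E'supp r0 r0m degr0 by (auto simp: E_def split: if_splits)
  have EE: "mmult (insert m S') E E = (\<lambda>i j. 0)"
  proof (intro ext)
    fix i j
    show "mmult (insert m S') E E i j = 0"
    proof (cases "j = m")
      case True
      have "mmult (insert m S') E E i j = (\<Sum>k\<in>insert m S'. if k = r0 then E i r0 else 0)"
        unfolding mmult_def by (rule sum.cong) (auto simp: E_def True)
      also have "\<dots> = E i r0" using r0 st_fin by simp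
      also have "\<dots> = 0" using nu r0m by (simp add: E_def)
      finally show ?thesis .
    next
      case False
      have "mmult (insert m S') E E i j = mmult (insert m S') E' E' i j"
        unfolding mmult_def
      proof (rule sum.cong[OF refl])
        fix k assume "k \<in> insert m S'"
        show "E i k * E k j = E' i k * E' k j"
        proof (cases "k = m")
          case True
          have "E' k j = 0" using E'supp[of k j] True st_mnot by auto
          then show ?thesis using False by (simp add: E_def)
        qed (simp add: E_def False)
      qed
      also have "\<dots> = 0" using E'ext by (simp add: is_elementary_def is_Mdiff_def)
      finally show ?thesis .
    qed
  qed
  have Ecol: "\<forall>j\<in>insert m S'. (\<forall>i. E i j = 0) \<or> (\<exists>i\<in>insert m S'. E i j = 1 \<and> (\<forall>i'. i' \<noteq> i \<longrightarrow> E i' j = 0))"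
  proof
    fix j assume j: "j \<in> insert m S'"
    show "(\<forall>i. E i j = 0) \<or> (\<exists>i\<in>insert m S'. E i j = 1 \<and> (\<forall>i'. i' \<noteq> i \<longrightarrow> E i' j = 0))"
    proof (cases "j = m")
      case True
      then show ?thesis using r0 by (auto simp: E_def)
    next
      case False
      then have "(\<forall>i. E' i j = 0) \<or> (\<exists>i\<in>insert m S'. E' i j = 1 \<and> (\<forall>i'. i' \<noteq> i \<longrightarrow> E' i' j = 0))"
        using E'ext j by (simp add: is_elementary_def)
      then show ?thesis using False by (simp add: E_def)
    qed
  qed
  have Einj: "\<forall>i j j'. j \<in> insert m S' \<longrightarrow> j' \<in> insert m S' \<longrightarrow> E i j \<noteq> 0 \<longrightarrow> E i j' \<noteq> 0 \<longrightarrow> j = j'"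
    using elem_inj[OF E'el] nl by (auto simp: E_def split: if_splits)
  have "is_elementary (insert m S') deg E"
    using Esupp EE Ecol Einj st_fin by (simp add: is_elementary_def is_Mdiff_def)
  then have "good (insert m S') deg D T E"
    using ut dg diag mm by (simp add: good_def)
  then show ?thesis by blast
qed

lemma exists_good_c: "\<exists>T E. good (insert m S') deg D T E"
proof (cases "\<exists>r\<in>S'. cR r \<noteq> 0")
  case False
  then have "\<forall>r. cR r = 0" using cR_esp by (auto simp: espace_def)
  then show ?thesis by (rule caseA)
next
  case True
  define R where "R = {r\<in>S'. cR r \<noteq> 0}"
  have R: "finite R" "R \<noteq> {}" using True finS' by (auto simp: R_def)
  define r0 where "r0 = Max R"
  have "r0 \<in> R" using R by (simp add: r0_def)
  moreover have "\<forall>r\<in>S'. cR r \<noteq> 0 \<longrightarrow> r \<le> r0" using R by (auto simp: r0_def R_def)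
  ultimately show ?thesis using caseB[of r0] by (auto simp: R_def)
qed

end

lemma exists_good_step: "\<exists>T E. good (insert m S') deg D T E"
  using exists_c exists_good_c by blast

end

lemma exists_good:
  assumes "is_Mdiff S deg (D :: nat \<Rightarrow> nat \<Rightarrow> 'a::field)"
  shows "\<exists>T E. good S deg D T E"
proof -
  have fin: "finite S" using assms by (simp add: is_Mdiff_def)
  have "\<forall>D :: nat \<Rightarrow> nat \<Rightarrow> 'a. is_Mdiff S deg D \<longrightarrow> (\<exists>T E. good S deg D T E)"
    using fin
  proof (induction S rule: finite_linorder_max_induct)
    case empty
    show ?case
    proof (intro allI impI)
      fix D :: "nat \<Rightarrow> nat \<Rightarrow> 'a" assume "is_Mdiff {} deg D"
      then have D0: "D = (\<lambda>i j. 0)" by (auto simp: is_Mdiff_def fun_eq_iff)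
      have "good {} deg D (\<lambda>i j. 0) (\<lambda>i j. 0)"
        by (simp add: good_def utri_def D0 mmult_def is_elementary_def is_Mdiff_def fun_eq_iff)
      then show "\<exists>T E. good {} deg D T E" by blast
    qed
  next
    case (insert b A)
    show ?case
    proof (intro allI impI)
      fix D :: "nat \<Rightarrow> nat \<Rightarrow> 'a" assume Md: "is_Mdiff (insert b A) deg D"
      have "is_Mdiff A deg (mrestrict A D)"
        by (rule mdiff_restrict[OF Md]) (use insert in auto)
      then obtain T' E' where "good A deg (mrestrict A D) T' E'" using insert.IH by blast
      then show "\<exists>T E. good (insert b A) deg D T E"
        using exists_good_step[OF insert(1) insert(2) Md] by blast
    qed
  qed
  then show ?thesis using assms by blast
qed

lemma midentity_mult_left:
  assumes "\<And>i j. M i j \<noteq> 0 \<Longrightarrow> i \<in> S" "finite S"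
  shows "mmult S (midentity S) M = M"
proof (intro ext)
  fix i j
  have "mmult S (midentity S) M i j = (\<Sum>k\<in>S. if k = i then (if i \<in> S then M i j else 0) else 0)"
    unfolding mmult_def midentity_def by (rule sum.cong) auto
  also have "\<dots> = M i j" using assms by (cases "i \<in> S") auto
  finally show "mmult S (midentity S) M i j = M i j" .
qed

lemma good_Mequiv:
  assumes Md: "is_Mdiff S deg D" and gd: "good S deg D T E"
  shows "Mequiv S deg D E"
proof -
  have fin: "finite S" using Md by (simp add: is_Mdiff_def)
  have ut: "utri S T" and dg: "\<forall>i j. T i j \<noteq> 0 \<longrightarrow> deg i = deg j" and diag: "\<forall>j\<in>S. T j j \<noteq> 0"
    and DT: "mmult S D T = mmult S T E" and el: "is_elementary S deg E"
    using gd by (auto simp: good_def)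
  obtain Ti where Ti: "mmult S T Ti = midentity S" "mmult S Ti T = midentity S"
    using utri_inverse_exists[OF ut fin diag] by blast
  have fa: "is_filt_aut S deg T"
    using ut dg Ti by (auto simp: is_filt_aut_def utri_def)
  have Esupp: "E i j \<noteq> 0 \<Longrightarrow> i \<in> S" for i j using el by (auto simp: is_elementary_def is_Mdiff_def)
  have "mmult S Ti (mmult S D T) = mmult S Ti (mmult S T E)" by (simp add: DT)
  also have "\<dots> = mmult S (mmult S Ti T) E" by (simp add: mmult_assoc)
  also have "\<dots> = E" using Ti(2) midentity_mult_left[OF Esupp fin] by simp
  finally show ?thesis using fa Ti unfolding Mequiv_def by metis
qed

definition Lle :: "nat set \<Rightarrow> nat \<Rightarrow> (nat \<Rightarrow> 'a::field) set" where
  "Lle S j = espace {s\<in>S. s \<le> j}"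
definition Llt :: "nat set \<Rightarrow> nat \<Rightarrow> (nat \<Rightarrow> 'a::field) set" where
  "Llt S j = espace {s\<in>S. s < j}"

definition Pinv :: "nat set \<Rightarrow> (nat \<Rightarrow> nat \<Rightarrow> 'a::field) \<Rightarrow> nat \<Rightarrow> nat \<Rightarrow> bool" where
  "Pinv S D j i \<longleftrightarrow> j \<in> S \<and> i \<in> S \<and> (\<exists>v\<in>Lle S j. mapply S D v \<in> Lle S i \<and>
     (\<forall>u\<in>Llt S j. \<forall>w\<in>Llt S i. mapply S D v \<noteq> mapply S D u + w))"

lemma mmult_row_supp:
  assumes "\<And>i j. M i j \<noteq> 0 \<Longrightarrow> i \<in> S" "mmult S M N i j \<noteq> 0"
  shows "i \<in> S"
proof (rule ccontr)
  assume "i \<notin> S"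
  then have "M i k = 0" for k using assms(1) by blast
  then show False using assms(2) by (simp add: mmult_def)
qed

lemma elem_Mequiv_pair:
  assumes Md: "is_Mdiff S deg D" and el: "is_elementary S deg E" and eq: "Mequiv S deg D E"
  shows "E i j \<noteq> 0 \<longleftrightarrow> Pinv S D j i"
proof -
  have fin: "finite S" using Md by (simp add: is_Mdiff_def)
  obtain T Ti0 where fa: "is_filt_aut S deg T" and TTi0: "mmult S T Ti0 = midentity S"
    and Ti0T: "mmult S Ti0 T = midentity S" and Edef: "E = mmult S Ti0 (mmult S D T)"
    using eq by (auto simp: Mequiv_def)
  have ut: "utri S T" using fa by (auto simp: is_filt_aut_def utri_def)
  define Ti where "Ti = mrestrict S Ti0"
  have TTi: "mmult S T Ti = midentity S"
  proof (intro ext)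
    fix a b
    show "mmult S T Ti a b = midentity S a b"
    proof (cases "b \<in> S")
      case True
      have "mmult S T Ti a b = mmult S T Ti0 a b"
        unfolding mmult_def Ti_def mrestrict_def using True by (intro sum.cong) auto
      then show ?thesis using TTi0 by simp
    next
      case False
      then show ?thesis by (simp add: mmult_def Ti_def mrestrict_def midentity_def)
    qed
  qed
  have TiT: "mmult S Ti T = midentity S"
  proof (intro ext)
    fix a b
    show "mmult S Ti T a b = midentity S a b"
    proof (cases "a \<in> S")
      case True
      have "mmult S Ti T a b = mmult S Ti0 T a b"
        unfolding mmult_def Ti_def mrestrict_def using True by (intro sum.cong) auto
      then show ?thesis using Ti0T by simp
    next
      case False
      then show ?thesis by (simp add: mmult_def Ti_def mrestrict_def midentity_def)
    qed
  qed
  have Tiut: "utri S Ti"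
    unfolding utri_def
  proof (intro allI impI)
    fix a b assume "Ti a b \<noteq> 0"
    then have "a \<in> S" "b \<in> S" "Ti0 a b \<noteq> 0" by (auto simp: Ti_def mrestrict_def split: if_splits)
    then show "a \<in> S \<and> b \<in> S \<and> a \<le> b" using inv_utri[OF ut fin Ti0T] by blast
  qed
  have Dsupp: "D a b \<noteq> 0 \<Longrightarrow> a \<in> S" for a b using Md by (auto simp: is_Mdiff_def)
  have Esupp: "E a b \<noteq> 0 \<Longrightarrow> a \<in> S" for a b using el by (auto simp: is_elementary_def is_Mdiff_def)
  have DTE: "mmult S D T = mmult S T E"
  proof -
    have "mmult S T E = mmult S (mmult S T Ti0) (mmult S D T)" by (simp add: Edef mmult_assoc)
    also have "\<dots> = mmult S D T" using TTi0 midentity_mult_left[OF mmult_row_supp[OF Dsupp] fin] by simp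
    finally show ?thesis by simp
  qed
  have DTv: "mapply S D (mapply S T x) = mapply S T (mapply S E x)" for x
    by (simp add: mapply_mmult DTE)
  have TTiv: "y \<in> espace S \<Longrightarrow> mapply S T (mapply S Ti y) = y" for y
    by (simp add: mapply_mmult TTi midentity_apply fin)
  have TiTv: "x \<in> espace S \<Longrightarrow> mapply S Ti (mapply S T x) = x" for x
    by (simp add: mapply_mmult TiT midentity_apply fin)
  have Tle: "x \<in> Lle S k \<Longrightarrow> mapply S T x \<in> Lle S k" for x k
    unfolding Lle_def by (rule utri_into[OF ut dclosed_le])
  have Tlt: "x \<in> Llt S k \<Longrightarrow> mapply S T x \<in> Llt S k" for x k
    unfolding Llt_def by (rule utri_into[OF ut dclosed_lt])
  have Tile: "x \<in> Lle S k \<Longrightarrow> mapply S Ti x \<in> Lle S k" for x k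
    unfolding Lle_def by (rule utri_into[OF Tiut dclosed_le])
  have Tilt: "x \<in> Llt S k \<Longrightarrow> mapply S Ti x \<in> Llt S k" for x k
    unfolding Llt_def by (rule utri_into[OF Tiut dclosed_lt])
  have leS: "x \<in> Lle S k \<Longrightarrow> x \<in> espace S" for x k unfolding Lle_def by (erule espace_mono) auto
  have ltS: "x \<in> Llt S k \<Longrightarrow> x \<in> espace S" for x k unfolding Llt_def by (erule espace_mono) auto
  have ESp: "mapply S E x \<in> espace S" for x
  proof (rule espaceI)
    fix a assume "a \<notin> S"
    then have "E a b = 0" for b using Esupp by blast
    then show "mapply S E x a = 0" by (simp add: mapply_def)
  qed
  show ?thesis
  proof
    assume Eij: "E i j \<noteq> 0"
    have ec: "i \<in> S" "j \<in> S" "E i j = 1" "\<And>i'. i' \<noteq> i \<Longrightarrow> E i' j = 0" using elem_col[OF el Eij] by auto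
    define v where "v = mapply S T (ev j)"
    have v: "v \<in> Lle S j" unfolding v_def by (rule Tle) (use ec in \<open>auto simp: Lle_def intro: ev_espace\<close>)
    have colE: "mapply S E (ev j) = (\<lambda>k. E k j)" using mapply_ev[OF ec(2) fin] .
    have Dv: "mapply S D v = mapply S T (\<lambda>k. E k j)" by (simp add: v_def DTv colE)
    have Dv2: "mapply S D v = mapply S T (ev i)"
      using Dv elem_col_apply1[OF el Eij fin] mapply_ev[OF ec(1) fin, of T] by simp
    have DvL: "mapply S D v \<in> Lle S i" unfolding Dv2 by (rule Tle) (use ec in \<open>auto simp: Lle_def intro: ev_espace\<close>)
    have nd: "mapply S D v \<noteq> mapply S D u + w" if u: "u \<in> Llt S j" and w: "w \<in> Llt S i" for u w
    proof
      assume h: "mapply S D v = mapply S D u + w"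
      define c where "c = mapply S Ti u"
      have c: "c \<in> Llt S j" unfolding c_def by (rule Tilt[OF u])
      have uTc: "u = mapply S T c" unfolding c_def using TTiv[OF ltS[OF u]] by simp
      have colEsp: "(\<lambda>k. E k j) \<in> espace S" using ESp colE by metis
      have "mapply S Ti (mapply S D v) = (\<lambda>k. E k j)" unfolding Dv using TiTv[OF colEsp] .
      moreover have "mapply S Ti (mapply S D u + w) = mapply S E c + mapply S Ti w"
        unfolding mapply_add uTc DTv using TiTv[OF ESp] by simp
      ultimately have eq2: "(\<lambda>k. E k j) = mapply S E c + mapply S Ti w" using h by simp
      have "mapply S Ti w i = 0" using Tilt[OF w] by (auto simp: Llt_def espace_def)
      moreover have "mapply S E c i = 0"
        unfolding mapply_def
      proof (rule sum.neutral, intro ballI)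
        fix s assume "s \<in> S"
        show "E i s * c s = 0"
        proof (cases "E i s = 0")
          case False
          then have "s = j" using elem_inj[OF el Eij] by metis
          then have "c s = 0" using c by (auto simp: Llt_def espace_def)
          then show ?thesis by simp
        qed simp
      qed
      ultimately show False using fun_cong[OF eq2, of i] ec(3) by simp
    qed
    show "Pinv S D j i" unfolding Pinv_def using ec v DvL nd by blast
  next
    assume P: "Pinv S D j i"
    then obtain v where ij: "j \<in> S" "i \<in> S" and v: "v \<in> Lle S j" and DvL: "mapply S D v \<in> Lle S i"
      and nd: "\<And>u w. u \<in> Llt S j \<Longrightarrow> w \<in> Llt S i \<Longrightarrow> mapply S D v \<noteq> mapply S D u + w"
      unfolding Pinv_def by blast
    define c where "c = mapply S Ti v"
    have c: "c \<in> Lle S j" unfolding c_def by (rule Tile[OF v])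
    have vTc: "v = mapply S T c" unfolding c_def using TTiv[OF leS[OF v]] by simp
    define c' where "c' = c - fscale (c j) (ev j)"
    have c': "c' \<in> Llt S j"
      using c by (auto simp: Llt_def Lle_def espace_def c'_def ev_def)
    have csplit: "c = c' + fscale (c j) (ev j)" by (simp add: c'_def)
    have Tc': "mapply S T c' \<in> Llt S j" by (rule Tlt[OF c'])
    have zlt: "0 \<in> Llt S i" by (simp add: Llt_def)
    have Dv: "mapply S D v = mapply S D (mapply S T c') + fscale (c j) (mapply S T (\<lambda>k. E k j))"
    proof -
      have "mapply S D v = mapply S T (mapply S E c)" by (simp add: vTc DTv)
      also have "\<dots> = mapply S T (mapply S E c') + fscale (c j) (mapply S T (mapply S E (ev j)))"
        by (subst csplit) (simp add: mapply_add mapply_scale)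
      also have "\<dots> = mapply S D (mapply S T c') + fscale (c j) (mapply S T (\<lambda>k. E k j))"
        by (simp add: DTv mapply_ev[OF ij(1) fin])
      finally show ?thesis .
    qed
    show "E i j \<noteq> 0"
    proof (cases "\<forall>k. E k j = 0")
      case True
      then have "mapply S T (\<lambda>k. E k j) = 0" by (simp add: mapply_def fun_eq_iff)
      then have "mapply S D v = mapply S D (mapply S T c') + 0" using Dv by (simp add: fun_eq_iff)
      then show ?thesis using nd[OF Tc' zlt] by blast
    next
      case False
      then obtain p where p: "E p j \<noteq> 0" by auto
      have ep: "p \<in> S" "E p j = 1" "\<And>i'. i' \<noteq> p \<Longrightarrow> E i' j = 0" using elem_col[OF el p] by auto
      have TcolE: "mapply S T (\<lambda>k. E k j) = mapply S T (ev p)"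
        using elem_col_apply1[OF el p fin] mapply_ev[OF ep(1) fin, of T] by simp
      have cj: "c j \<noteq> 0"
      proof
        assume "c j = 0"
        then have "mapply S D v = mapply S D (mapply S T c') + 0" using Dv by (simp add: fun_eq_iff)
        then show False using nd[OF Tc' zlt] by blast
      qed
      have "mapply S Ti (mapply S D v) = mapply S E c" by (simp add: vTc DTv TiTv[OF ESp])
      then have Ec: "mapply S E c \<in> Lle S i" using Tile[OF DvL] by simp
      have "mapply S E c p = (\<Sum>s\<in>S. if s = j then c j else 0)"
        unfolding mapply_def
      proof (rule sum.cong[OF refl])
        fix s assume "s \<in> S"
        show "E p s * c s = (if s = j then c j else 0)"
          using elem_inj[OF el p, of s] ep by (cases "E p s = 0") auto
      qed
      also have "\<dots> = c j" using ij fin by simp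
      finally have "mapply S E c p \<noteq> 0" using cj by simp
      then have pi: "p \<le> i" using Ec ep(1) by (auto simp: Lle_def espace_def)
      show ?thesis
      proof (cases "p = i")
        case True then show ?thesis using p by simp
      next
        case False
        then have "p < i" using pi by simp
        have "mapply S T (ev p) \<in> Lle S p" by (rule Tle) (use ep in \<open>auto simp: Lle_def intro: ev_espace\<close>)
        then have "fscale (c j) (mapply S T (ev p)) \<in> Llt S i"
          using \<open>p < i\<close> by (auto simp: Lle_def Llt_def espace_def)
        moreover have "mapply S D v = mapply S D (mapply S T c') + fscale (c j) (mapply S T (ev p))"
          using Dv TcolE by simp
        ultimately show ?thesis using nd[OF Tc'] by blast
      qed
    qed
  qed
qed

lemma sum_nz2: "mapply S M x i \<noteq> 0 \<Longrightarrow> \<exists>s\<in>S. M i s \<noteq> 0 \<and> x s \<noteq> 0"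
  unfolding mapply_def by (metis (mono_tags, lifting) mult_zero_left mult_zero_right sum.neutral)

lemma espace_le_lt:
  assumes "x \<in> espace {c\<in>B. c \<le> b}" "x b = 0"
  shows "x \<in> espace {c\<in>B. c < b}"
proof (rule espaceI)
  fix i assume i: "i \<notin> {c\<in>B. c < b}"
  show "x i = 0"
  proof (cases "i = b")
    case False
    then have "i \<notin> {c\<in>B. c \<le> b}" using i by auto
    then show ?thesis using espaceD[OF assms(1)] by blast
  qed (use assms in simp)
qed

lemma barannikov_char:
  assumes Md: "is_Mdiff S deg D"
  shows "is_elementary S deg (barannikov S deg D) \<and> Mequiv S deg D (barannikov S deg D)"
proof -
  obtain T E where gd: "good S deg D T E" using exists_good[OF Md] by blast
  have el: "is_elementary S deg E" using gd by (simp add: good_def)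
  have eq: "Mequiv S deg D E" by (rule good_Mequiv[OF Md gd])
  have uniq: "E2 = E" if el2: "is_elementary S deg E2" and eq2: "Mequiv S deg D E2" for E2
  proof (intro ext)
    fix i j
    have iff: "E2 i j \<noteq> 0 \<longleftrightarrow> E i j \<noteq> 0"
      using elem_Mequiv_pair[OF Md el2 eq2] elem_Mequiv_pair[OF Md el eq] by blast
    show "E2 i j = E i j"
    proof (cases "E i j = 0")
      case True then show ?thesis using iff by simp
    next
      case False
      then show ?thesis using iff elem_col[OF el False] elem_col[OF el2, of i j] by simp
    qed
  qed
  have "barannikov S deg D = E"
    unfolding barannikov_def by (rule the_equality) (use el eq uniq in blast)+
  then show ?thesis using el eq by simp
qed

lemma barannikov_pair:
  assumes Md: "is_Mdiff S deg D" and b: "barannikov S deg D i j = 1"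
  shows "Pinv S D j i"
  using elem_Mequiv_pair[of S deg D "barannikov S deg D" i j] barannikov_char[OF Md] Md b by simp

context
  fixes A B :: "nat set" and deg :: "nat \<Rightarrow> int" and D :: "nat \<Rightarrow> nat \<Rightarrow> 'a::field"
  assumes Mp: "is_Mpair A B deg D"
begin

lemma finA: "finite A" using Mp by (simp add: is_Mpair_def is_Mdiff_def)
lemma BA: "B \<subseteq> A" using Mp by (simp add: is_Mpair_def)
lemma finB: "finite B" using finA BA finite_subset by blast
lemma DA: "is_Mdiff A deg D" using Mp by (simp add: is_Mpair_def)
lemma DB_pres: "v \<in> espace B \<Longrightarrow> mapply A D v \<in> espace B" using Mp by (simp add: is_Mpair_def)
lemma Dsupp: "D i j \<noteq> 0 \<Longrightarrow> i \<in> A \<and> j \<in> A \<and> i < j \<and> deg i = deg j - 1"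
  using DA by (auto simp: is_Mdiff_def)
lemma DD: "mmult A D D = (\<lambda>i j. 0)" using DA by (simp add: is_Mdiff_def)

lemma DDx: "mapply A D (mapply A D x) = 0"
  by (simp only: mapply_mmult DD) (simp add: mapply_def fun_eq_iff)

lemma D_on_B:
  assumes "x \<in> espace B"
  shows "mapply B (mrestrict B D) x = mapply A D x"
proof
  fix i
  have e: "mapply A D x = mapply B D x" by (rule mapply_sub[OF finA BA assms])
  show "mapply B (mrestrict B D) x i = mapply A D x i"
  proof (cases "i \<in> B")
    case True
    then show ?thesis unfolding e by (auto simp: mapply_def mrestrict_def intro!: sum.cong)
  next
    case False
    then have "mapply A D x i = 0" using DB_pres[OF assms] by (simp add: espace_def)
    then show ?thesis using False by (simp add: mapply_def mrestrict_def)
  qed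
qed

lemma DB_Mdiff: "is_Mdiff B deg (mrestrict B D)"
proof -
  have colB: "D k j = 0" if "j \<in> B" "k \<notin> B" for k j
  proof -
    have jA: "j \<in> A" using that BA by blast
    have "mapply A D (ev j) \<in> espace B" by (rule DB_pres[OF ev_espace[OF that(1)]])
    then have "(\<lambda>i. D i j) \<in> espace B" unfolding mapply_ev[OF jA finA] .
    then show ?thesis using that(2) by (simp add: espace_def)
  qed
  have "mmult B (mrestrict B D) (mrestrict B D) i j = 0" for i j
  proof (cases "i \<in> B \<and> j \<in> B")
    case True
    have "mmult B (mrestrict B D) (mrestrict B D) i j = (\<Sum>k\<in>B. D i k * D k j)"
      using True by (simp add: mmult_def mrestrict_def)
    also have "\<dots> = (\<Sum>k\<in>A. D i k * D k j)"
      by (rule sum.mono_neutral_left[OF finA BA]) (use colB True in auto)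
    also have "\<dots> = mmult A D D i j" by (simp add: mmult_def)
    also have "\<dots> = 0" using DD by simp
    finally show ?thesis .
  next
    case False
    then show ?thesis by (auto simp: mmult_def mrestrict_def intro!: sum.neutral)
  qed
  then have "mmult B (mrestrict B D) (mrestrict B D) = (\<lambda>i j. 0)" by (simp add: fun_eq_iff)
  moreover have "\<forall>i j. mrestrict B D i j \<noteq> 0 \<longrightarrow> i \<in> B \<and> j \<in> B \<and> i < j \<and> deg i = deg j - 1"
    using Dsupp by (auto simp: mrestrict_def)
  ultimately show ?thesis using finB by (simp add: is_Mdiff_def)
qed

lemma D_on_Bk:
  assumes dc: "dclosed B Bk" and x: "x \<in> espace Bk"
  shows "mapply Bk (mrestrict Bk D) x = mapply A D x"
proof -
  have BkB: "Bk \<subseteq> B" using dc by (simp add: dclosed_def)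
  have xB: "x \<in> espace B" using x BkB espace_mono by blast
  have Dx: "mapply A D x \<in> espace Bk"
  proof (rule espaceI)
    fix i assume i: "i \<notin> Bk"
    show "mapply A D x i = 0"
    proof (rule ccontr)
      assume h: "mapply A D x i \<noteq> 0"
      then obtain s where s: "s \<in> A" "D i s \<noteq> 0" "x s \<noteq> 0" using sum_nz2 by blast
      have sBk: "s \<in> Bk" using espaceD[OF x] s(3) by blast
      have i_s: "i \<le> s" using Dsupp[OF s(2)] by simp
      have iB: "i \<in> B" using espaceD[OF DB_pres[OF xB]] h by blast
      have all: "\<forall>a\<in>B. \<forall>b\<in>Bk. a \<le> b \<longrightarrow> a \<in> Bk" using dc by (simp add: dclosed_def)
      have "i \<in> Bk" using all iB sBk i_s by blast
      then show False using i by blast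
    qed
  qed
  have finBk: "finite Bk" using finB BkB finite_subset by blast
  have BkA: "Bk \<subseteq> A" using BkB BA by blast
  have e: "mapply A D x = mapply Bk D x" by (rule mapply_sub[OF finA BkA x])
  show ?thesis
  proof
    fix i
    show "mapply Bk (mrestrict Bk D) x i = mapply A D x i"
    proof (cases "i \<in> Bk")
      case True
      then show ?thesis unfolding e by (auto simp: mapply_def mrestrict_def intro!: sum.cong)
    next
      case False
      have "mapply A D x i = 0" using Dx False by (rule espaceD)
      moreover have "mapply Bk (mrestrict Bk D) x i = 0" using False by (simp add: mapply_def mrestrict_def)
      ultimately show ?thesis by simp
    qed
  qed
qed

lemma cycles_Bk:
  assumes "dclosed B Bk"
  shows "cycles Bk (mrestrict Bk D) = {x \<in> espace Bk. mapply A D x = 0}"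
  using D_on_Bk[OF assms] by (auto simp: cycles_def)

lemma bounds_B: "boundaries B (mrestrict B D) = mapply A D ` espace B"
  using D_on_B by (auto simp: boundaries_def)

lemma dclosed_le_B: "dclosed B {c\<in>B. c \<le> b}" by (auto simp: dclosed_def)
lemma dclosed_lt_B: "dclosed B {c\<in>B. c < b}" by (auto simp: dclosed_def)

lemma I_pre_eq:
  assumes "dclosed B Bk"
  shows "I_pre A B D Bk = {z + y | z y. z \<in> espace Bk \<and> mapply A D z = 0 \<and> y \<in> mapply A D ` espace B} \<inter> conn_image A B D"
  unfolding I_pre_def cycles_Bk[OF assms] bounds_B by simp

lemma I_pre_mono: "I_pre A B D {c\<in>B. c < b} \<subseteq> I_pre A B D {c\<in>B. c \<le> b}"
  unfolding I_pre_eq[OF dclosed_le_B] I_pre_eq[OF dclosed_lt_B]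
proof -
  have "espace {c\<in>B. c < b} \<subseteq> espace {c\<in>B. c \<le> b}" by (auto intro: espace_mono)
  then show "{z + y | z y. z \<in> espace {c\<in>B. c < b} \<and> mapply A D z = 0 \<and> y \<in> mapply A D ` espace B} \<inter> conn_image A B D
    \<subseteq> {z + y | z y. z \<in> espace {c\<in>B. c \<le> b} \<and> mapply A D z = 0 \<and> y \<in> mapply A D ` espace B} \<inter> conn_image A B D"
    by blast
qed

lemma part1:
  assumes be: "bdry_essential A B D b"
  shows "hom_essential B deg (mrestrict B D) b"
proof -
  have bB: "b \<in> B" and ne: "I_pre A B D {c\<in>B. c \<le> b} \<noteq> I_pre A B D {c\<in>B. c < b}"
    using be by (auto simp: bdry_essential_def)
  let ?DB = "mrestrict B D"
  have sub: "I_pre A B D {c\<in>B. c \<le> b} \<subseteq> I_pre A B D {c\<in>B. c < b}" if np: "\<exists>x. Pinv B ?DB b x \<or> Pinv B ?DB x b"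
  proof
    fix t assume "t \<in> I_pre A B D {c\<in>B. c \<le> b}"
    then obtain z x0 where t: "t = z + mapply A D x0" and z: "z \<in> espace {c\<in>B. c \<le> b}" "mapply A D z = 0"
      and x0: "x0 \<in> espace B" and tC: "t \<in> conn_image A B D"
      unfolding I_pre_eq[OF dclosed_le_B] by blast
    have zB: "z \<in> espace B" using z(1) by (rule espace_mono) auto
    have goal: "t \<in> I_pre A B D {c\<in>B. c < b}" if "z' \<in> espace {c\<in>B. c < b}" "mapply A D z' = 0"
      "x' \<in> espace B" "t = z' + mapply A D x'" for z' x'
      unfolding I_pre_eq[OF dclosed_lt_B] using that tC by blast
    from np obtain x where "Pinv B ?DB b x \<or> Pinv B ?DB x b" by blast
    then show "t \<in> I_pre A B D {c\<in>B. c < b}"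
    proof
      assume P: "Pinv B ?DB b x"
      then obtain v where v: "v \<in> Lle B b" and nd: "\<And>u w. u \<in> Llt B b \<Longrightarrow> w \<in> Llt B x \<Longrightarrow> mapply B ?DB v \<noteq> mapply B ?DB u + w"
        unfolding Pinv_def by blast
      have zb: "z b = 0"
      proof (rule ccontr)
        assume zb: "z b \<noteq> 0"
        define u where "u = v - fscale (v b / z b) z"
        have "u \<in> espace {c\<in>B. c \<le> b}" unfolding u_def
          using v z(1) by (auto simp: Lle_def intro: espace_diff espace_scale)
        moreover have "u b = 0" using zb by (simp add: u_def)
        ultimately have u: "u \<in> Llt B b" unfolding Llt_def by (rule espace_le_lt)
        have vB: "v \<in> espace B" using v by (auto simp: Lle_def elim: espace_mono)
        have "mapply B ?DB u = mapply B ?DB v - fscale (v b / z b) (mapply B ?DB z)"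
          by (simp add: u_def mapply_diff mapply_scale)
        also have "mapply B ?DB z = 0" using D_on_B[OF zB] z(2) by simp
        finally have "mapply B ?DB v = mapply B ?DB u + 0" by (simp add: fun_eq_iff)
        moreover have "(0::nat \<Rightarrow> 'a) \<in> Llt B x" by (simp add: Llt_def)
        ultimately show False using nd[OF u] by blast
      qed
      have "z \<in> espace {c\<in>B. c < b}" using z(1) zb by (rule espace_le_lt)
      then show ?thesis using goal z(2) x0 t by blast
    next
      assume P: "Pinv B ?DB x b"
      then obtain v where v: "v \<in> Lle B x" and y0L: "mapply B ?DB v \<in> Lle B b"
        and nd: "\<And>u w. u \<in> Llt B x \<Longrightarrow> w \<in> Llt B b \<Longrightarrow> mapply B ?DB v \<noteq> mapply B ?DB u + w"
        unfolding Pinv_def by blast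
      have vB: "v \<in> espace B" using v by (auto simp: Lle_def elim: espace_mono)
      define y0 where "y0 = mapply A D v"
      have y0e: "mapply B ?DB v = y0" using D_on_B[OF vB] by (simp add: y0_def)
      have y0b: "y0 b \<noteq> 0"
      proof
        assume "y0 b = 0"
        then have "y0 \<in> Llt B b" using y0L y0e espace_le_lt unfolding Lle_def Llt_def by blast
        moreover have "mapply B ?DB v = mapply B ?DB 0 + y0" using y0e by simp
        moreover have "(0::nat \<Rightarrow> 'a) \<in> Llt B x" by (simp add: Llt_def)
        ultimately show False using nd by blast
      qed
      define k where "k = z b / y0 b"
      define z' where "z' = z - fscale k y0"
      define x' where "x' = x0 + fscale k v"
      have "z' \<in> espace {c\<in>B. c \<le> b}" unfolding z'_def
        using y0L y0e z(1) by (auto simp: Lle_def intro: espace_diff espace_scale)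
      moreover have "z' b = 0" using y0b by (simp add: z'_def k_def)
      ultimately have z'1: "z' \<in> espace {c\<in>B. c < b}" by (rule espace_le_lt)
      have "mapply A D z' = mapply A D z - fscale k (mapply A D y0)"
        by (simp add: z'_def mapply_diff mapply_scale)
      also have "\<dots> = 0" using z(2) DDx[of v] by (simp add: y0_def fun_eq_iff)
      finally have z'2: "mapply A D z' = 0" .
      have x'B: "x' \<in> espace B" unfolding x'_def using x0 vB by (intro espace_add espace_scale)
      have "z' + mapply A D x' = z + mapply A D x0"
        by (simp add: z'_def x'_def mapply_add mapply_scale y0_def)
      then show ?thesis using goal[OF z'1 z'2 x'B] t by simp
    qed
  qed
  have "\<not> (\<exists>x. is_pair B deg ?DB b x \<or> is_pair B deg ?DB x b)"
  proof
    assume "\<exists>x. is_pair B deg ?DB b x \<or> is_pair B deg ?DB x b"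
    then have "\<exists>x. Pinv B ?DB b x \<or> Pinv B ?DB x b"
      using barannikov_pair[OF DB_Mdiff] by (auto simp: is_pair_def)
    then have "I_pre A B D {c\<in>B. c \<le> b} \<subseteq> I_pre A B D {c\<in>B. c < b}" by (rule sub)
    then show False using ne I_pre_mono by blast
  qed
  then show ?thesis using bB by (simp add: hom_essential_def)
qed

end

definition Hk :: "(nat \<Rightarrow> int) \<Rightarrow> int \<Rightarrow> (nat \<Rightarrow> 'a::field) set" where
  "Hk deg k = {v. \<forall>i. deg i \<noteq> k \<longrightarrow> v i = 0}"

lemma proj_Hk: "proj deg k v \<in> Hk deg k" by (simp add: proj_def Hk_def)
lemma proj_Hk_id: "v \<in> Hk deg k \<Longrightarrow> proj deg k v = v" by (auto simp: proj_def Hk_def fun_eq_iff)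
lemma Hk_sub: "fvs.subspace (Hk deg k)" by (simp add: fvs.subspace_def Hk_def)
lemma proj_add: "proj deg k (x + y) = proj deg k x + proj deg k y" by (simp add: proj_def fun_eq_iff)
lemma proj_diff: "proj deg k (x - y) = proj deg k x - proj deg k y" by (simp add: proj_def fun_eq_iff)
lemma espace_deg_eq: "espace_deg S deg k = espace S \<inter> Hk deg k"
  by (auto simp: espace_deg_def espace_def Hk_def)

context
  fixes A B :: "nat set" and deg :: "nat \<Rightarrow> int" and D :: "nat \<Rightarrow> nat \<Rightarrow> 'a::field"
  assumes Mp: "is_Mpair A B deg D"
begin

lemma Dproj: "mapply A D (proj deg (k + 1) x) = proj deg k (mapply A D x)"
proof -
  have "mapply A D (proj deg (k + 1) x) = proj deg (k + 1 + -1) (mapply A D x)"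
    by (rule proj_mapply) (use Dsupp[OF Mp] in force)
  then show ?thesis by simp
qed

lemma Dproj': "mapply A D (proj deg k x) = proj deg (k - 1) (mapply A D x)"
  using Dproj[of "k - 1" x] by simp

lemma BA': "B \<subseteq> A" using BA[OF Mp] .

lemma I_mem:
  assumes "dclosed B X"
  shows "t \<in> I_pre A B D X \<longleftrightarrow> (\<exists>z x. t = z + mapply A D x \<and> z \<in> espace X \<and> mapply A D z = 0 \<and> x \<in> espace B) \<and> t \<in> conn_image A B D"
  unfolding I_pre_eq[OF Mp assms] by blast

lemma C_mem: "t \<in> conn_image A B D \<longleftrightarrow> (\<exists>x. t = mapply A D x \<and> x \<in> espace A \<and> mapply A D x \<in> espace B)"
  by (auto simp: conn_image_def)

lemma C_sub: "fvs.subspace (conn_image A B D)"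
proof -
  have z: "0 \<in> conn_image A B D" unfolding C_mem by (rule exI[of _ 0]) simp
  have a: "s + t \<in> conn_image A B D" if s_in: "s \<in> conn_image A B D" and t_in: "t \<in> conn_image A B D" for s t
  proof -
    obtain x where x: "s = mapply A D x" "x \<in> espace A" "mapply A D x \<in> espace B" using C_mem[THEN iffD1, OF s_in] by blast
    obtain y where y: "t = mapply A D y" "y \<in> espace A" "mapply A D y \<in> espace B" using C_mem[THEN iffD1, OF t_in] by blast
    have "s + t = mapply A D (x + y) \<and> x + y \<in> espace A \<and> mapply A D (x + y) \<in> espace B"
      using x y by (simp add: mapply_add espace_add)
    then show ?thesis using C_mem by blast
  qed
  have sc: "fscale c s \<in> conn_image A B D" if s_in: "s \<in> conn_image A B D" for c s
  proof -
    obtain x where x: "s = mapply A D x" "x \<in> espace A" "mapply A D x \<in> espace B" using C_mem[THEN iffD1, OF s_in] by blast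
    have "fscale c s = mapply A D (fscale c x) \<and> fscale c x \<in> espace A \<and> mapply A D (fscale c x) \<in> espace B"
      using x by (simp add: mapply_scale espace_scale)
    then show ?thesis using C_mem by blast
  qed
  show ?thesis unfolding fvs.subspace_def using z a sc by blast
qed

lemma C_proj: "t \<in> conn_image A B D \<Longrightarrow> proj deg k t \<in> conn_image A B D"
  unfolding C_mem
proof -
  assume "\<exists>x. t = mapply A D x \<and> x \<in> espace A \<and> mapply A D x \<in> espace B"
  then obtain x where x: "t = mapply A D x" "x \<in> espace A" "mapply A D x \<in> espace B" by blast
  show "\<exists>x. proj deg k t = mapply A D x \<and> x \<in> espace A \<and> mapply A D x \<in> espace B"
    by (rule exI[of _ "proj deg (k + 1) x"]) (use x in \<open>simp add: Dproj proj_espace\<close>)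
qed

lemma I_sub:
  assumes dc: "dclosed B X"
  shows "fvs.subspace (I_pre A B D X)"
proof -
  have "fvs.subspace {t. \<exists>z x. t = z + mapply A D x \<and> z \<in> espace X \<and> mapply A D z = 0 \<and> x \<in> espace B}"
    unfolding fvs.subspace_def
  proof (intro conjI ballI allI)
    show "0 \<in> {t. \<exists>z x. t = z + mapply A D x \<and> z \<in> espace X \<and> mapply A D z = 0 \<and> x \<in> espace B}"
      by (auto intro!: exI[of _ 0])
  next
    fix s t assume "s \<in> {t. \<exists>z x. t = z + mapply A D x \<and> z \<in> espace X \<and> mapply A D z = 0 \<and> x \<in> espace B}"
      "t \<in> {t. \<exists>z x. t = z + mapply A D x \<and> z \<in> espace X \<and> mapply A D z = 0 \<and> x \<in> espace B}"
    then obtain z1 x1 z2 x2 where h: "s = z1 + mapply A D x1" "z1 \<in> espace X" "mapply A D z1 = 0" "x1 \<in> espace B"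
      "t = z2 + mapply A D x2" "z2 \<in> espace X" "mapply A D z2 = 0" "x2 \<in> espace B" by blast
    have "s + t = (z1 + z2) + mapply A D (x1 + x2) \<and> z1 + z2 \<in> espace X \<and> mapply A D (z1 + z2) = 0 \<and> x1 + x2 \<in> espace B"
      using h by (simp add: mapply_add espace_add algebra_simps)
    then show "s + t \<in> {t. \<exists>z x. t = z + mapply A D x \<and> z \<in> espace X \<and> mapply A D z = 0 \<and> x \<in> espace B}"
      by blast
  next
    fix c s assume "s \<in> {t. \<exists>z x. t = z + mapply A D x \<and> z \<in> espace X \<and> mapply A D z = 0 \<and> x \<in> espace B}"
    then obtain z1 x1 where h: "s = z1 + mapply A D x1" "z1 \<in> espace X" "mapply A D z1 = 0" "x1 \<in> espace B" by blast
    have "fscale c s = fscale c z1 + mapply A D (fscale c x1) \<and> fscale c z1 \<in> espace X \<and> mapply A D (fscale c z1) = 0 \<and> fscale c x1 \<in> espace B"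
      using h by (simp add: mapply_scale espace_scale fvs.scale_right_distrib)
    then show "fscale c s \<in> {t. \<exists>z x. t = z + mapply A D x \<and> z \<in> espace X \<and> mapply A D z = 0 \<and> x \<in> espace B}"
      by blast
  qed
  moreover have Ieq: "I_pre A B D X = {t. \<exists>z x. t = z + mapply A D x \<and> z \<in> espace X \<and> mapply A D z = 0 \<and> x \<in> espace B} \<inter> conn_image A B D"
    using I_mem[OF dc] by blast
  ultimately show ?thesis unfolding Ieq by (intro fvs.subspace_inter C_sub)
qed


lemma dcle: "dclosed B {c\<in>B. c \<le> b}" by (auto simp: dclosed_def)
lemma dclt: "dclosed B {c\<in>B. c < b}" by (auto simp: dclosed_def)

lemma C_espace: "t \<in> conn_image A B D \<Longrightarrow> t \<in> espace A"
  using C_mem[of t] BA' espace_mono by blast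

lemma I_C: "dclosed B X \<Longrightarrow> t \<in> I_pre A B D X \<Longrightarrow> t \<in> conn_image A B D"
  using I_mem by blast

lemma proj_I:
  assumes dc: "dclosed B X" and t: "t \<in> I_pre A B D X"
  shows "proj deg k t \<in> I_pre A B D X"
proof -
  obtain z x where h: "t = z + mapply A D x" "z \<in> espace X" "mapply A D z = 0" "x \<in> espace B"
    and tC: "t \<in> conn_image A B D" using I_mem[OF dc] t by blast
  have "proj deg k t = proj deg k z + mapply A D (proj deg (k + 1) x) \<and> proj deg k z \<in> espace X
     \<and> mapply A D (proj deg k z) = 0 \<and> proj deg (k + 1) x \<in> espace B"
    using h by (simp add: proj_add Dproj Dproj' proj_espace) (simp add: proj_def fun_eq_iff)
  moreover have "proj deg k t \<in> conn_image A B D" by (rule C_proj[OF tC])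
  ultimately show ?thesis using I_mem[OF dc] by blast
qed

lemma step_neq_deg:
  assumes n: "n \<in> B" "deg n \<noteq> k" and t: "t \<in> I_pre A B D {c\<in>B. c \<le> n}" "t \<in> Hk deg k"
  shows "t \<in> I_pre A B D {c\<in>B. c < n}"
proof -
  obtain z x where h: "t = z + mapply A D x" "z \<in> espace {c\<in>B. c \<le> n}" "mapply A D z = 0" "x \<in> espace B"
    and tC: "t \<in> conn_image A B D" using I_mem[OF dcle] t by blast
  have z'1: "proj deg k z \<in> espace {c\<in>B. c < n}"
    by (rule espace_le_lt) (use proj_espace[OF h(2)] n in \<open>auto simp: proj_def\<close>)
  have "t = proj deg k t" using proj_Hk_id[OF t(2)] by simp
  also have "\<dots> = proj deg k z + mapply A D (proj deg (k + 1) x)"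
    using h by (simp add: proj_add Dproj)
  finally have teq: "t = proj deg k z + mapply A D (proj deg (k + 1) x)" .
  have "mapply A D (proj deg k z) = 0" using h by (simp add: Dproj') (simp add: proj_def fun_eq_iff)
  then show ?thesis using I_mem[OF dclt] teq z'1 proj_espace[OF h(4)] tC by blast
qed

lemma step_eq_deg:
  assumes n: "n \<in> B" "deg n = k" and ne: "I_pre A B D {c\<in>B. c \<le> n} \<noteq> I_pre A B D {c\<in>B. c < n}"
  shows "fvs.dim (I_pre A B D {c\<in>B. c \<le> n} \<inter> Hk deg k) = fvs.dim (I_pre A B D {c\<in>B. c < n} \<inter> Hk deg k) + 1"
proof -
  let ?U = "I_pre A B D {c\<in>B. c < n} \<inter> Hk deg k"
  let ?V = "I_pre A B D {c\<in>B. c \<le> n} \<inter> Hk deg k"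
  have mono: "I_pre A B D {c\<in>B. c < n} \<subseteq> I_pre A B D {c\<in>B. c \<le> n}" by (rule I_pre_mono[OF Mp])
  obtain t where t: "t \<in> I_pre A B D {c\<in>B. c \<le> n}" "t \<notin> I_pre A B D {c\<in>B. c < n}"
    using ne mono by blast
  define w where "w = proj deg k t"
  have wV: "w \<in> ?V" using proj_I[OF dcle t(1)] proj_Hk by (simp add: w_def)
  have Usub: "fvs.subspace ?U" by (intro fvs.subspace_inter I_sub dclt Hk_sub)
  have IltS: "fvs.subspace (I_pre A B D {c\<in>B. c < n})" by (rule I_sub[OF dclt])
  have tw: "t - w \<in> I_pre A B D {c\<in>B. c < n}"
  proof -
    obtain z x where h: "t = z + mapply A D x" "z \<in> espace {c\<in>B. c \<le> n}" "mapply A D z = 0" "x \<in> espace B"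
      and tC: "t \<in> conn_image A B D" using I_mem[OF dcle] t(1) by blast
    have z1: "z - proj deg k z \<in> espace {c\<in>B. c < n}"
    proof (rule espace_le_lt)
      show "z - proj deg k z \<in> espace {c\<in>B. c \<le> n}" using h(2) by (intro espace_diff proj_espace)
      show "(z - proj deg k z) n = 0" using n by (simp add: proj_def)
    qed
    have z2: "mapply A D (z - proj deg k z) = 0"
      using h(3) by (simp add: mapply_diff Dproj') (simp add: proj_def fun_eq_iff)
    have x1: "x - proj deg (k + 1) x \<in> espace B" using h(4) by (intro espace_diff proj_espace)
    define px where "px = proj deg (k + 1) x"
    have Dpx: "mapply A D px = proj deg k (mapply A D x)" by (simp add: px_def Dproj)
    have "t - w = (z - proj deg k z) + mapply A D (x - px)"
      using h(1) by (simp add: w_def proj_add mapply_diff Dpx algebra_simps)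
    moreover have "t - w \<in> conn_image A B D"
      using tC C_proj[OF tC] C_sub unfolding w_def by (simp add: fvs.subspace_diff)
    ultimately show ?thesis using I_mem[OF dclt] z1 z2 x1 unfolding px_def by blast
  qed
  have wU: "w \<notin> ?U"
  proof
    assume "w \<in> ?U"
    then have "w \<in> I_pre A B D {c\<in>B. c < n}" by blast
    then have "(t - w) + w \<in> I_pre A B D {c\<in>B. c < n}" by (rule fvs.subspace_add[OF IltS tw])
    then show False using t(2) by simp
  qed
  obtain zw xw where hw: "w = zw + mapply A D xw" "zw \<in> espace {c\<in>B. c \<le> n}" "mapply A D zw = 0" "xw \<in> espace B"
    using I_mem[OF dcle] wV by blast
  have zwn: "zw n \<noteq> 0"
  proof
    assume "zw n = 0"
    then have "zw \<in> espace {c\<in>B. c < n}" using espace_le_lt[OF hw(2)] by blast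
    then have "w \<in> I_pre A B D {c\<in>B. c < n}"
      using I_mem[OF dclt] hw I_C[OF dcle] wV by blast
    then show False using wU wV by blast
  qed
  have Vspan: "?V \<subseteq> fvs.span (insert w ?U)"
  proof
    fix s assume sV: "s \<in> ?V"
    obtain zs xs where hs: "s = zs + mapply A D xs" "zs \<in> espace {c\<in>B. c \<le> n}" "mapply A D zs = 0" "xs \<in> espace B"
      using I_mem[OF dcle] sV by blast
    define a where "a = zs n / zw n"
    define r where "r = s - fscale a w"
    have r1: "zs - fscale a zw \<in> espace {c\<in>B. c < n}"
      by (rule espace_le_lt) (use hs(2) hw(2) zwn in \<open>auto simp: a_def intro: espace_diff espace_scale\<close>)
    have r2: "mapply A D (zs - fscale a zw) = 0" using hs(3) hw(3) by (simp add: mapply_diff mapply_scale fun_eq_iff)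
    have r3: "xs - fscale a xw \<in> espace B" using hs(4) hw(4) by (intro espace_diff espace_scale)
    have req: "r = (zs - fscale a zw) + mapply A D (xs - fscale a xw)"
      by (simp add: r_def hs(1) hw(1) mapply_diff mapply_scale fvs.scale_right_distrib algebra_simps)
    have sC: "s \<in> conn_image A B D" using sV I_C[OF dcle] by blast
    have wC: "w \<in> conn_image A B D" using wV I_C[OF dcle] by blast
    have rC: "r \<in> conn_image A B D" unfolding r_def using sC wC
      by (intro fvs.subspace_diff[OF C_sub] fvs.subspace_scale[OF C_sub]) auto
    have rH: "r \<in> Hk deg k" unfolding r_def using sV wV
      by (intro fvs.subspace_diff[OF Hk_sub] fvs.subspace_scale[OF Hk_sub]) auto
    have rU: "r \<in> ?U" using I_mem[OF dclt] req r1 r2 r3 rC rH by blast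
    have "s = r + fscale a w" by (simp add: r_def)
    also have "\<dots> \<in> fvs.span (insert w ?U)"
      by (intro fvs.span_add fvs.span_scale fvs.span_base) (use rU in auto)
    finally show "s \<in> fvs.span (insert w ?U)" .
  qed
  have UA: "?U \<subseteq> espace A" using I_C[OF dclt] C_espace by blast
  show ?thesis
    by (rule dim_insert_step[OF finA[OF Mp] UA Usub _ Vspan wV wU]) (use mono in blast)
qed


definition JJ :: "nat \<Rightarrow> int \<Rightarrow> (nat \<Rightarrow> 'a) set" where
  "JJ n k = I_pre A B D {c\<in>B. c < n} \<inter> Hk deg k"

lemma step_dim:
  "fvs.dim (JJ (Suc n) k) = fvs.dim (JJ n k) + (if bdry_essential A B D n \<and> deg n = k then 1 else 0)"
proof (cases "n \<in> B")
  case False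
  then have "{c\<in>B. c < Suc n} = {c\<in>B. c < n}" by (auto simp: less_Suc_eq)
  then show ?thesis using False by (simp add: JJ_def bdry_essential_def)
next
  case True
  have eqS: "{c\<in>B. c < Suc n} = {c\<in>B. c \<le> n}" by (auto simp: less_Suc_eq_le)
  have mono: "I_pre A B D {c\<in>B. c < n} \<subseteq> I_pre A B D {c\<in>B. c \<le> n}" by (rule I_pre_mono[OF Mp])
  show ?thesis
  proof (cases "deg n = k")
    case False
    have "JJ (Suc n) k = JJ n k"
      unfolding JJ_def eqS using step_neq_deg[OF True False] mono by blast
    then show ?thesis using False by simp
  next
    case dk: True
    show ?thesis
    proof (cases "I_pre A B D {c\<in>B. c \<le> n} = I_pre A B D {c\<in>B. c < n}")
      case True
      then show ?thesis by (simp add: JJ_def eqS bdry_essential_def)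
    next
      case False
      then show ?thesis using step_eq_deg[OF \<open>n \<in> B\<close> dk False] \<open>n \<in> B\<close> dk
        by (simp add: JJ_def eqS bdry_essential_def)
    qed
  qed
qed

lemma count_dim:
  "fvs.dim (JJ n k) = fvs.dim (JJ 0 k) + card {b. bdry_essential A B D b \<and> deg b = k \<and> b < n}"
proof (induction n)
  case 0
  then show ?case by simp
next
  case (Suc n)
  let ?P = "\<lambda>b. bdry_essential A B D b \<and> deg b = k"
  have fin: "finite {b. ?P b \<and> b < n}" by (rule finite_subset[of _ "{..<n}"]) auto
  have "{b. ?P b \<and> b < Suc n} = (if ?P n then insert n {b. ?P b \<and> b < n} else {b. ?P b \<and> b < n})"
    by (auto simp: less_Suc_eq)
  then have "card {b. ?P b \<and> b < Suc n} = card {b. ?P b \<and> b < n} + (if ?P n then 1 else 0)"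
    using fin by simp
  then show ?case unfolding step_dim[of n k] Suc.IH by (simp add: fscale_def[abs_def])
qed

lemma JJ0: "JJ 0 k = boundaries_deg B deg (mrestrict B D) k"
proof
  show "JJ 0 k \<subseteq> boundaries_deg B deg (mrestrict B D) k"
  proof
    fix t assume t: "t \<in> JJ 0 k"
    have t1: "t \<in> I_pre A B D {c\<in>B. c < (0::nat)}" using t unfolding JJ_def by blast
    obtain z x where h: "t = z + mapply A D x" "z \<in> espace {c\<in>B. c < (0::nat)}" "x \<in> espace B"
      using I_mem[OF dclt[of 0]] t1 by blast
    have "z = 0" using h(2) by (auto simp: espace_def fun_eq_iff)
    then have "t = mapply A D x" using h by simp
    also have "\<dots> = proj deg k (mapply A D x)"
    proof -
      have "mapply A D x \<in> Hk deg k" using t h \<open>z = 0\<close> by (simp add: JJ_def)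
      then show ?thesis by (rule proj_Hk_id[symmetric])
    qed
    also have "\<dots> = mapply A D (proj deg (k + 1) x)" by (simp add: Dproj)
    also have "\<dots> = mapply B (mrestrict B D) (proj deg (k + 1) x)"
      using D_on_B[OF Mp proj_espace[OF h(3)]] by simp
    finally show "t \<in> boundaries_deg B deg (mrestrict B D) k"
      unfolding boundaries_deg_def espace_deg_eq using proj_espace[OF h(3)] proj_Hk by blast
  qed
next
  show "boundaries_deg B deg (mrestrict B D) k \<subseteq> JJ 0 k"
  proof
    fix t assume "t \<in> boundaries_deg B deg (mrestrict B D) k"
    then obtain y where y: "y \<in> espace B" "y \<in> Hk deg (k + 1)" "t = mapply B (mrestrict B D) y"
      unfolding boundaries_deg_def espace_deg_eq by blast
    have tD: "t = mapply A D y" using D_on_B[OF Mp y(1)] y(3) by simp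
    have "t = proj deg k t" unfolding tD using proj_Hk_id[OF y(2)] Dproj[of k y] by simp
    then have tH: "t \<in> Hk deg k" using proj_Hk by metis
    have yA: "y \<in> espace A" using y(1) BA' espace_mono by blast
    have tC: "t \<in> conn_image A B D" using C_mem tD yA DB_pres[OF Mp y(1)] by blast
    have "t = 0 + mapply A D y" using tD by simp
    moreover have "(0::nat \<Rightarrow> 'a) \<in> espace {c\<in>B. c < (0::nat)}" by simp
    ultimately have "t \<in> I_pre A B D {c\<in>B. c < (0::nat)}"
      using I_mem[OF dclt] tC y(1) by fastforce
    then show "t \<in> JJ 0 k" using tH by (simp add: JJ_def)
  qed
qed

lemma JJN:
  assumes N: "\<forall>c\<in>B. c < N"
  shows "JJ N k = conn_image_deg A B deg D k"
proof -
  have BN: "{c\<in>B. c < N} = B" using N by auto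
  have "t \<in> I_pre A B D B \<longleftrightarrow> t \<in> conn_image A B D" for t
  proof
    assume "t \<in> conn_image A B D"
    then obtain x where x: "t = mapply A D x" "x \<in> espace A" "mapply A D x \<in> espace B" using C_mem by blast
    have "t = t + mapply A D 0" by simp
    moreover have "mapply A D t = 0" using DDx[OF Mp] x(1) by simp
    ultimately show "t \<in> I_pre A B D B"
      using I_mem[OF dclosed_S] \<open>t \<in> conn_image A B D\<close> x(3) espace_zero by (metis x(1))
  qed (use I_C[OF dclosed_S] in blast)
  then have IB: "I_pre A B D B = conn_image A B D" by blast
  show ?thesis
  proof
    show "JJ N k \<subseteq> conn_image_deg A B deg D k"
    proof
      fix t assume "t \<in> JJ N k"
      then have tC: "t \<in> conn_image A B D" and tH: "t \<in> Hk deg k" using IB BN by (auto simp: JJ_def)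
      then obtain x where x: "t = mapply A D x" "x \<in> espace A" "mapply A D x \<in> espace B" using C_mem by blast
      have tp: "t = mapply A D (proj deg (k + 1) x)" using proj_Hk_id[OF tH] x(1) by (simp add: Dproj)
      have px: "proj deg (k + 1) x \<in> espace A \<inter> Hk deg (k + 1)" using proj_espace[OF x(2)] proj_Hk by blast
      have "mapply A D (proj deg (k + 1) x) \<in> espace B" using tp x(1) x(3) by simp
      then show "t \<in> conn_image_deg A B deg D k"
        unfolding conn_image_deg_def espace_deg_eq using px tp by blast
    qed
  next
    show "conn_image_deg A B deg D k \<subseteq> JJ N k"
    proof
      fix t assume "t \<in> conn_image_deg A B deg D k"
      then obtain x where x: "t = mapply A D x" "x \<in> espace A" "x \<in> Hk deg (k + 1)" "mapply A D x \<in> espace B"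
        unfolding conn_image_deg_def espace_deg_eq by blast
      have tC: "t \<in> conn_image A B D" using C_mem x by blast
      have "t = proj deg k t" unfolding x(1) using proj_Hk_id[OF x(3)] Dproj[of k x] by simp
      then have tH: "t \<in> Hk deg k" using proj_Hk by metis
      show "t \<in> JJ N k" using tC tH IB BN by (simp add: JJ_def)
    qed
  qed
qed

lemma part2:
  "card {b. bdry_essential A B D b \<and> deg b = k}
     = fvs.dim (conn_image_deg A B deg D k) - fvs.dim (boundaries_deg B deg (mrestrict B D) k)"
proof -
  define N where "N = Suc (Max (insert 0 B))"
  have N: "\<forall>c\<in>B. c < N" using finB[OF Mp] by (auto simp: N_def le_imp_less_Suc)
  have "{b. bdry_essential A B D b \<and> deg b = k \<and> b < N} = {b. bdry_essential A B D b \<and> deg b = k}"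
    using N by (auto simp: bdry_essential_def)
  then have "fvs.dim (conn_image_deg A B deg D k) = fvs.dim (boundaries_deg B deg (mrestrict B D) k) + card {b. bdry_essential A B D b \<and> deg b = k}"
    using count_dim[of N k] JJN[OF N, of k] JJ0[of k] by simp
  then show ?thesis by simp
qed

end

theorem lemma3p3:
  fixes A B :: "nat set" and deg :: "nat \<Rightarrow> int" and D :: "nat \<Rightarrow> nat \<Rightarrow> 'a::field"
  assumes "is_Mpair A B deg D"
  shows "(\<forall>b. bdry_essential A B D b \<longrightarrow> hom_essential B deg (mrestrict B D) b)
       \<and> (\<forall>k::int. card {b. bdry_essential A B D b \<and> deg b = k}
             = fvs.dim (conn_image_deg A B deg D k) - fvs.dim (boundaries_deg B deg (mrestrict B D) k))"
  using part1[OF assms] part2[OF assms] by blast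

end
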